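(* Let $G=(V,E)$ be a connected graph, let $T$ be a spanning tree of $G$ rooted in $s$ which is an $\mathcal L$-tree of LexDFS on $G$, and let $\sigma$ be a vertex order of $G$ starting at $s$ whose $\mathcal L$-tree is $T$. Then Ordering$(G,T,s,\sigma^-)$ outputs $\sigma$ if and only if $\sigma$ is a LexDFS order of $G$.
   Context: Graphs are finite, simple, undirected; $N(v)$ is the neighborhood of $v$. A vertex order is a linear order $\sigma=(v_1,\dots,v_n)$ of $V$; $\sigma(i)=v_i$; $u\prec_\sigma v$ means $u$ appears before $v$; $\sigma^-$ is the reverse order. DFS: a search that starts at a vertex and repeatedly visits an unvisited neighbor of the most recently visited vertex that still has an unvisited neighbor. DFS$^+(\tau)$ on a graph $H$: the DFS of $H$ starting at the last vertex of $\tau$ that, whenever several vertices may be visited next, visits the one rightmost in $\tau$. LexDFS started at $s$: label $s$ with $(0)$, all others with the empty label; for $i=1,\dots,n$ pick an unnumbered vertex $v$ with lexicographically largest label, set $\sigma(i)=v$, prepend $i$ to the label of each unnumbered neighbor of $v$; a LexDFS order is any possible output. $\mathcal L$-tree of a vertex order $(v_1,\dots,v_n)$: the spanning tree rooted at $v_1$ with an edge from each $v_i$ ($i>1$) to its rightmost neighbor $v_j$ with $j<i$; a rooted spanning tree $T$ (root $s$) is an $\mathcal L$-tree of LexDFS on $G$ if some LexDFS order of $G$ starting at $s$ has $\mathcal L$-tree $T$. Refining an ordered partition $(Q_1,\dots,Q_k)$ of $V$ with $S'$ replaces each $Q_i$ by $(Q_i\cap S',Q_i\setminus S')$ whenever both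 are nonempty. Procedure Ordering$(G,T,s,\rho)$ (for $\rho$ ending with $s$): let $\beta$ be the reverse of a BFS order of $T$ starting at $s$; $\mathcal Q=(V)$; for $i=1,\dots,n$, with $v=\beta(i)$, refine $\mathcal Q$ with $\{w\in N(v): w\prec_\beta v\}$; order the vertices inside each class of $\mathcal Q$ according to $\rho^-$ and move $\{s\}$ to the leftmost position; let $\tau$ be the reverse of the resulting order of all vertices; output DFS$^+(\tau)$ on $T$. *)

theory Defs
  imports Main
begin

definition simple_graph :: "'a set \<Rightarrow> ('a \<Rightarrow> 'a \<Rightarrow> bool) \<Rightarrow> bool" where
  "simple_graph V E \<longleftrightarrow> finite V \<and> (\<forall>x y. E x y \<longrightarrow> E y x) \<and> (\<forall>x. \<not> E x x)
     \<and> (\<forall>x y. E x y \<longrightarrow> x \<in> V \<and> y \<in> V)"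

definition connected_graph :: "'a set \<Rightarrow> ('a \<Rightarrow> 'a \<Rightarrow> bool) \<Rightarrow> bool" where
  "connected_graph V E \<longleftrightarrow> V \<noteq> {} \<and> (\<forall>x\<in>V. \<forall>y\<in>V. E\<^sup>*\<^sup>* x y)"

definition edge_set :: "('a \<Rightarrow> 'a \<Rightarrow> bool) \<Rightarrow> 'a set set" where
  "edge_set E = {{x, y} | x y. E x y}"

definition spanning_tree :: "'a set \<Rightarrow> ('a \<Rightarrow> 'a \<Rightarrow> bool) \<Rightarrow> ('a \<Rightarrow> 'a \<Rightarrow> bool) \<Rightarrow> bool" where
  "spanning_tree V E T \<longleftrightarrow> simple_graph V T \<and> (\<forall>x y. T x y \<longrightarrow> E x y)
     \<and> connected_graph V T \<and> card (edge_set T) = card V - 1"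

definition vertex_order :: "'a set \<Rightarrow> 'a list \<Rightarrow> bool" where
  "vertex_order V \<sigma> \<longleftrightarrow> distinct \<sigma> \<and> set \<sigma> = V"

definition prec :: "'a list \<Rightarrow> 'a \<Rightarrow> 'a \<Rightarrow> bool" where
  "prec \<sigma> u v \<longleftrightarrow> (\<exists>i j. i < j \<and> j < length \<sigma> \<and> \<sigma> ! i = u \<and> \<sigma> ! j = v)"

text \<open>Label of vertex v after the first i vertices (positions 0..i-1, numbered 1..i)
of \<sigma> have been numbered: the numbers of the numbered neighbours, most recent first,
followed by 0 if v is the start vertex.\<close>
definition lexdfs_label :: "('a \<Rightarrow> 'a \<Rightarrow> bool) \<Rightarrow> 'a \<Rightarrow> 'a list \<Rightarrow> nat \<Rightarrow> 'a \<Rightarrow> nat list" where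
  "lexdfs_label E s \<sigma> i v =
     map Suc (filter (\<lambda>j. E (\<sigma> ! j) v) (rev [0..<i])) @ (if v = s then [0] else [])"

text \<open>Strict lexicographic order on labels (a proper prefix is smaller).\<close>
definition label_less :: "nat list \<Rightarrow> nat list \<Rightarrow> bool" where
  "label_less l1 l2 \<longleftrightarrow> (l1, l2) \<in> lexord {(a, b). a < b}"

definition is_lexdfs_order :: "'a set \<Rightarrow> ('a \<Rightarrow> 'a \<Rightarrow> bool) \<Rightarrow> 'a \<Rightarrow> 'a list \<Rightarrow> bool" where
  "is_lexdfs_order V E s \<sigma> \<longleftrightarrow> vertex_order V \<sigma> \<and>
     (\<forall>i < length \<sigma>. \<forall>w \<in> V - set (take (Suc i) \<sigma>).
        \<not> label_less (lexdfs_label E s \<sigma> i (\<sigma> ! i)) (lexdfs_label E s \<sigma> i w))"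

definition ltree :: "('a \<Rightarrow> 'a \<Rightarrow> bool) \<Rightarrow> 'a list \<Rightarrow> 'a \<Rightarrow> 'a \<Rightarrow> bool" where
  "ltree E \<sigma> x y \<longleftrightarrow> (\<exists>i < length \<sigma>. \<exists>j < i.
      ((x = \<sigma> ! i \<and> y = \<sigma> ! j) \<or> (x = \<sigma> ! j \<and> y = \<sigma> ! i)) \<and> E (\<sigma> ! i) (\<sigma> ! j)
      \<and> (\<forall>k. j < k \<and> k < i \<longrightarrow> \<not> E (\<sigma> ! i) (\<sigma> ! k)))"

text \<open>Generic (queue-based) BFS from s: state = (visited order, queue).\<close>
inductive bfs_run :: "('a \<Rightarrow> 'a \<Rightarrow> bool) \<Rightarrow> 'a \<Rightarrow> 'a list \<Rightarrow> 'a list \<Rightarrow> bool"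
  for H s where
  start: "bfs_run H s [s] [s]"
| step: "bfs_run H s vis (u # q) \<Longrightarrow> distinct ns \<Longrightarrow>
         set ns = {w. H u w \<and> w \<notin> set vis} \<Longrightarrow> bfs_run H s (vis @ ns) (q @ ns)"

definition bfs_order :: "('a \<Rightarrow> 'a \<Rightarrow> bool) \<Rightarrow> 'a \<Rightarrow> 'a list \<Rightarrow> bool" where
  "bfs_order H s \<beta> \<longleftrightarrow> bfs_run H s \<beta> []"

text \<open>DFS^+(\<tau>) on H: start at the last vertex of \<tau>; repeatedly take the most recently
visited vertex that still has an unvisited neighbour and visit its unvisited neighbour
that is rightmost in \<tau>.\<close>
definition has_unvisited :: "('a \<Rightarrow> 'a \<Rightarrow> bool) \<Rightarrow> 'a list \<Rightarrow> 'a \<Rightarrow> bool" where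
  "has_unvisited H vis u \<longleftrightarrow> (\<exists>w. H u w \<and> w \<notin> set vis)"

inductive dfs_plus_run :: "('a \<Rightarrow> 'a \<Rightarrow> bool) \<Rightarrow> 'a list \<Rightarrow> 'a list \<Rightarrow> bool"
  for H \<tau> where
  start: "\<tau> \<noteq> [] \<Longrightarrow> dfs_plus_run H \<tau> [last \<tau>]"
| step: "dfs_plus_run H \<tau> vis \<Longrightarrow> i < length vis \<Longrightarrow> has_unvisited H vis (vis ! i) \<Longrightarrow>
         (\<forall>k. i < k \<and> k < length vis \<longrightarrow> \<not> has_unvisited H vis (vis ! k)) \<Longrightarrow>
         H (vis ! i) w \<Longrightarrow> w \<notin> set vis \<Longrightarrow>
         (\<forall>w'. H (vis ! i) w' \<and> w' \<notin> set vis \<longrightarrow> w' = w \<or> prec \<tau> w' w) \<Longrightarrow>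
         dfs_plus_run H \<tau> (vis @ [w])"

definition dfs_plus_output :: "('a \<Rightarrow> 'a \<Rightarrow> bool) \<Rightarrow> 'a list \<Rightarrow> 'a list \<Rightarrow> bool" where
  "dfs_plus_output H \<tau> out \<longleftrightarrow> dfs_plus_run H \<tau> out \<and> (\<forall>u \<in> set out. \<not> has_unvisited H out u)"

definition refine :: "'a set list \<Rightarrow> 'a set \<Rightarrow> 'a set list" where
  "refine Q S = concat (map (\<lambda>X. if X \<inter> S \<noteq> {} \<and> X - S \<noteq> {} then [X \<inter> S, X - S] else [X]) Q)"

text \<open>The order \<tau> computed by Ordering(G,T,s,\<rho>) for a given choice \<beta> of reversed BFS order.\<close>
definition ordering_tau :: "'a set \<Rightarrow> ('a \<Rightarrow> 'a \<Rightarrow> bool) \<Rightarrow> 'a \<Rightarrow> 'a list \<Rightarrow> 'a list \<Rightarrow> 'a list" where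
  "ordering_tau V E s \<rho> \<beta> =
     (let Q = fold (\<lambda>v Q. refine Q {w. E v w \<and> prec \<beta> w v}) \<beta> [V];
          L = concat (map (\<lambda>X. filter (\<lambda>x. x \<in> X) (rev \<rho>)) Q)
      in rev (s # removeAll s L))"

definition ordering_outputs :: "'a set \<Rightarrow> ('a \<Rightarrow> 'a \<Rightarrow> bool) \<Rightarrow> ('a \<Rightarrow> 'a \<Rightarrow> bool) \<Rightarrow> 'a \<Rightarrow> 'a list
     \<Rightarrow> 'a list \<Rightarrow> 'a list \<Rightarrow> bool" where
  "ordering_outputs V E T s \<rho> bfs out \<longleftrightarrow>
     dfs_plus_output T (ordering_tau V E s \<rho> (rev bfs)) out"

end

theory Submission
  imports Defs
begin

lemma prec_Nil[simp]: "\<not> prec [] a b"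
  by (simp add: prec_def)

lemma prec_Cons: "prec (x#xs) a b \<longleftrightarrow> (x = a \<and> b \<in> set xs) \<or> prec xs a b"
proof
  assume "prec (x#xs) a b"
  then obtain i j where ij: "i < j" "j < length (x#xs)" "(x#xs)!i = a" "(x#xs)!j = b"
    unfolding prec_def by blast
  obtain j' where j': "j = Suc j'" using ij by (cases j) auto
  show "(x = a \<and> b \<in> set xs) \<or> prec xs a b"
  proof (cases i)
    case 0
    then have "x = a" using ij by simp
    moreover have "b = xs!j'" "j' < length xs" using ij j' by auto
    ultimately show ?thesis by auto
  next
    case (Suc i')
    then have "prec xs a b" using ij j' unfolding prec_def by (intro exI[of _ i'] exI[of _ j']) auto
    then show ?thesis by blast
  qed
next
  assume "(x = a \<and> b \<in> set xs) \<or> prec xs a b"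
  then show "prec (x#xs) a b"
  proof
    assume "x = a \<and> b \<in> set xs"
    then obtain j where "j < length xs" "xs!j = b" by (auto simp: in_set_conv_nth)
    then show ?thesis using \<open>x = a \<and> b \<in> set xs\<close> unfolding prec_def
      by (intro exI[of _ 0] exI[of _ "Suc j"]) auto
  next
    assume "prec xs a b"
    then obtain i j where "i < j" "j < length xs" "xs!i = a" "xs!j = b" unfolding prec_def by blast
    then show ?thesis unfolding prec_def by (intro exI[of _ "Suc i"] exI[of _ "Suc j"]) auto
  qed
qed

lemma prec_append: "prec (xs@ys) a b \<longleftrightarrow> prec xs a b \<or> prec ys a b \<or> (a \<in> set xs \<and> b \<in> set ys)"
  by (induction xs) (auto simp: prec_Cons)

lemma prec_rev: "prec (rev xs) a b \<longleftrightarrow> prec xs b a"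
  by (induction xs) (auto simp: prec_Cons prec_append)

lemma prec_filter: "prec (filter P xs) a b \<longleftrightarrow> P a \<and> P b \<and> prec xs a b"
  by (induction xs) (auto simp: prec_Cons)

lemma prec_set: "prec xs a b \<Longrightarrow> a \<in> set xs \<and> b \<in> set xs"
  unfolding prec_def by auto

lemma distinct_nth_inj: "distinct xs \<Longrightarrow> i < length xs \<Longrightarrow> j < length xs \<Longrightarrow> xs!i = xs!j \<Longrightarrow> i = j"
  by (simp add: nth_eq_iff_index_eq)

lemma prec_nth_iff: "distinct xs \<Longrightarrow> i < length xs \<Longrightarrow> j < length xs \<Longrightarrow>
   prec xs (xs!i) (xs!j) \<longleftrightarrow> i < j"
proof
  assume d: "distinct xs" and i: "i < length xs" and j: "j < length xs" and "prec xs (xs!i) (xs!j)"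
  then obtain i' j' where ij: "i' < j'" "j' < length xs" "xs!i' = xs!i" "xs!j' = xs!j" unfolding prec_def by blast
  have "i' < length xs" using ij by simp
  then have "i' = i" using nth_eq_iff_index_eq[OF d _ i] ij(3) by simp
  moreover have "j' = j" using nth_eq_iff_index_eq[OF d ij(2) j] ij(4) by simp
  ultimately show "i < j" using ij by simp
next
  assume "distinct xs" "i < length xs" "j < length xs" "i < j"
  then show "prec xs (xs!i) (xs!j)" unfolding prec_def by blast
qed

lemma prec_trans: assumes d: "distinct xs" and ab: "prec xs a b" and bc: "prec xs b c" shows "prec xs a c"
proof -
  obtain i j where ij: "i < j" "j < length xs" "xs!i = a" "xs!j = b" using ab unfolding prec_def by blast
  obtain j' k where jk: "j' < k" "k < length xs" "xs!j' = b" "xs!k = c" using bc unfolding prec_def by blast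
  have "j' < length xs" using jk by simp
  moreover have "xs!j' = xs!j" using ij jk by simp
  ultimately have "j' = j" using nth_eq_iff_index_eq[OF d \<open>j' < length xs\<close> ij(2)] by simp
  then have "i < k" using ij jk by simp
  then show ?thesis using ij jk unfolding prec_def by blast
qed

lemma prec_irrefl: assumes d: "distinct xs" shows "\<not> prec xs a a"
proof
  assume "prec xs a a"
  then obtain i j where ij: "i < j" "j < length xs" "xs!i = a" "xs!j = a" unfolding prec_def by blast
  have "xs!i = xs!j" "i < length xs" using ij by auto
  then have "i = j" using nth_eq_iff_index_eq[OF d \<open>i < length xs\<close> ij(2)] by simp
  then show False using ij by simp
qed

lemma prec_asym: assumes d: "distinct xs" and ab: "prec xs a b" shows "\<not> prec xs b a"
proof
  assume "prec xs b a"
  with d ab have "prec xs a a" by (rule prec_trans)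
  then show False using prec_irrefl[OF d] by blast
qed

lemma prec_total: assumes "a \<in> set xs" "b \<in> set xs" "a \<noteq> b" shows "prec xs a b \<or> prec xs b a"
proof -
  obtain i where i: "i < length xs" "xs!i = a" using assms by (auto simp: in_set_conv_nth)
  obtain j where j: "j < length xs" "xs!j = b" using assms by (auto simp: in_set_conv_nth)
  have "i \<noteq> j" using i j assms by auto
  then have "i < j \<or> j < i" by auto
  then show ?thesis unfolding prec_def using i j by blast
qed

lemma nth_in_take_iff: assumes d: "distinct xs" and i: "i < length xs" shows "xs!i \<in> set (take k xs) \<longleftrightarrow> i < k"
proof
  assume "xs!i \<in> set (take k xs)"
  then obtain j where j: "j < length (take k xs)" "take k xs ! j = xs!i" by (auto simp: in_set_conv_nth)
  then have "j < k" "j < length xs" "xs ! j = xs ! i" by auto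
  then show "i < k" using nth_eq_iff_index_eq[OF d _ i] by simp
next
  assume "i < k"
  then have "i < length (take k xs)" "take k xs ! i = xs ! i" using i by auto
  then show "xs!i \<in> set (take k xs)" by (metis nth_mem)
qed

section \<open>Labels\<close>

lemma label_noS: "v \<noteq> s \<Longrightarrow> lexdfs_label E s \<rho> i v = map Suc (filter (\<lambda>j. E (\<rho> ! j) v) (rev [0..<i]))"
  by (simp add: lexdfs_label_def)

lemma lab_shape: "map Suc (filter M (rev [0..<i])) = [] \<or> (\<exists>t xs. map Suc (filter M (rev [0..<i])) = Suc t # xs \<and> t < i)"
proof (cases "map Suc (filter M (rev [0..<i]))")
  case Nil then show ?thesis by simp
next
  case (Cons a xs)
  then have "a \<in> set (map Suc (filter M (rev [0..<i])))" by simp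
  then obtain t where "a = Suc t" "t < i" by auto
  then show ?thesis using Cons by auto
qed

lemma ex_shift:
  assumes eq: "M1 i \<longleftrightarrow> M2 i"
  shows "(\<exists>t<i. M2 t \<and> \<not> M1 t \<and> (\<forall>t'. t < t' \<and> t' < i \<longrightarrow> (M1 t' \<longleftrightarrow> M2 t'))) \<longleftrightarrow>
         (\<exists>t<Suc i. M2 t \<and> \<not> M1 t \<and> (\<forall>t'. t < t' \<and> t' < Suc i \<longrightarrow> (M1 t' \<longleftrightarrow> M2 t')))"
proof
  assume "\<exists>t<i. M2 t \<and> \<not> M1 t \<and> (\<forall>t'. t < t' \<and> t' < i \<longrightarrow> (M1 t' \<longleftrightarrow> M2 t'))"
  then obtain t where t: "t<i" "M2 t" "\<not> M1 t" "\<forall>t'. t < t' \<and> t' < i \<longrightarrow> (M1 t' \<longleftrightarrow> M2 t')" by blast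
  have "\<forall>t'. t < t' \<and> t' < Suc i \<longrightarrow> (M1 t' \<longleftrightarrow> M2 t')"
  proof (intro allI impI)
    fix t' assume "t < t' \<and> t' < Suc i"
    then have "t' < i \<or> t' = i" by auto
    then show "M1 t' \<longleftrightarrow> M2 t'" using t eq \<open>t < t' \<and> t' < Suc i\<close> by auto
  qed
  then show "\<exists>t<Suc i. M2 t \<and> \<not> M1 t \<and> (\<forall>t'. t < t' \<and> t' < Suc i \<longrightarrow> (M1 t' \<longleftrightarrow> M2 t'))"
    using t by (intro exI[of _ t]) simp
next
  assume "\<exists>t<Suc i. M2 t \<and> \<not> M1 t \<and> (\<forall>t'. t < t' \<and> t' < Suc i \<longrightarrow> (M1 t' \<longleftrightarrow> M2 t'))"
  then obtain t where t: "t<Suc i" "M2 t" "\<not> M1 t" "\<forall>t'. t < t' \<and> t' < Suc i \<longrightarrow> (M1 t' \<longleftrightarrow> M2 t')" by blast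
  have "t \<noteq> i" using t eq by auto
  then have "t < i" using t by auto
  then show "\<exists>t<i. M2 t \<and> \<not> M1 t \<and> (\<forall>t'. t < t' \<and> t' < i \<longrightarrow> (M1 t' \<longleftrightarrow> M2 t'))"
    using t by (intro exI[of _ t]) simp
qed

lemma lex_filter:
  "label_less (map Suc (filter M1 (rev [0..<i]))) (map Suc (filter M2 (rev [0..<i]))) \<longleftrightarrow>
   (\<exists>t<i. M2 t \<and> \<not> M1 t \<and> (\<forall>t'. t < t' \<and> t' < i \<longrightarrow> (M1 t' \<longleftrightarrow> M2 t')))"
proof (induction i)
  case 0
  then show ?case by (simp add: label_less_def)
next
  case (Suc i)
  have r: "rev [0..<Suc i] = i # rev [0..<i]" by simp
  show ?case
  proof (cases "M1 i")
    case m1: True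
    show ?thesis
    proof (cases "M2 i")
      case True
      have "label_less (map Suc (filter M1 (rev [0..<Suc i]))) (map Suc (filter M2 (rev [0..<Suc i])))
         \<longleftrightarrow> label_less (map Suc (filter M1 (rev [0..<i]))) (map Suc (filter M2 (rev [0..<i])))"
        using m1 True by (simp add: label_less_def)
      also have "\<dots> \<longleftrightarrow> (\<exists>t<Suc i. M2 t \<and> \<not> M1 t \<and> (\<forall>t'. t < t' \<and> t' < Suc i \<longrightarrow> (M1 t' \<longleftrightarrow> M2 t')))"
        unfolding Suc.IH by (rule ex_shift[of M1 i M2]) (use m1 True in simp)
      finally show ?thesis .
    next
      case False
      have "\<not> label_less (map Suc (filter M1 (rev [0..<Suc i]))) (map Suc (filter M2 (rev [0..<Suc i])))"
        using lab_shape[of M2 i]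
      proof
        assume "map Suc (filter M2 (rev [0..<i])) = []"
        then show ?thesis using m1 False by (simp add: label_less_def)
      next
        assume "\<exists>t xs. map Suc (filter M2 (rev [0..<i])) = Suc t # xs \<and> t < i"
        then obtain t xs where "map Suc (filter M2 (rev [0..<i])) = Suc t # xs" "t < i" by auto
        then show ?thesis using m1 False by (simp add: label_less_def)
      qed
      moreover have "\<not> (\<exists>t<Suc i. M2 t \<and> \<not> M1 t \<and> (\<forall>t'. t < t' \<and> t' < Suc i \<longrightarrow> (M1 t' \<longleftrightarrow> M2 t')))"
      proof
        assume "\<exists>t<Suc i. M2 t \<and> \<not> M1 t \<and> (\<forall>t'. t < t' \<and> t' < Suc i \<longrightarrow> (M1 t' \<longleftrightarrow> M2 t'))"
        then obtain t where t: "t < Suc i" "M2 t" "\<not> M1 t" "\<forall>t'. t < t' \<and> t' < Suc i \<longrightarrow> (M1 t' \<longleftrightarrow> M2 t')" by blast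
        show False
        proof (cases "t = i")
          case True then show False using t m1 by simp
        next
          case False then have "t < i" using t by simp
          then show False using t(4)[rule_format, of i] m1 \<open>\<not> M2 i\<close> by simp
        qed
      qed
      ultimately show ?thesis by blast
    qed
  next
    case m1: False
    show ?thesis
    proof (cases "M2 i")
      case True
      have "label_less (map Suc (filter M1 (rev [0..<Suc i]))) (map Suc (filter M2 (rev [0..<Suc i])))"
        using lab_shape[of M1 i]
      proof
        assume "map Suc (filter M1 (rev [0..<i])) = []"
        then show ?thesis using m1 True by (simp add: label_less_def)
      next
        assume "\<exists>t xs. map Suc (filter M1 (rev [0..<i])) = Suc t # xs \<and> t < i"
        then obtain t xs where "map Suc (filter M1 (rev [0..<i])) = Suc t # xs" "t < i" by auto
        then show ?thesis using m1 True by (simp add: label_less_def)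
      qed
      moreover have "(\<exists>t<Suc i. M2 t \<and> \<not> M1 t \<and> (\<forall>t'. t < t' \<and> t' < Suc i \<longrightarrow> (M1 t' \<longleftrightarrow> M2 t')))"
        using m1 True by (intro exI[of _ i]) auto
      ultimately show ?thesis by blast
    next
      case False
      have "label_less (map Suc (filter M1 (rev [0..<Suc i]))) (map Suc (filter M2 (rev [0..<Suc i])))
         \<longleftrightarrow> label_less (map Suc (filter M1 (rev [0..<i]))) (map Suc (filter M2 (rev [0..<i])))"
        using m1 False by simp
      also have "\<dots> \<longleftrightarrow> (\<exists>t<Suc i. M2 t \<and> \<not> M1 t \<and> (\<forall>t'. t < t' \<and> t' < Suc i \<longrightarrow> (M1 t' \<longleftrightarrow> M2 t')))"
        unfolding Suc.IH by (rule ex_shift[of M1 i M2]) (use m1 False in simp)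
      finally show ?thesis .
    qed
  qed
qed

definition par_rel :: "('a \<Rightarrow> 'a \<Rightarrow> bool) \<Rightarrow> 'a list \<Rightarrow> 'a \<Rightarrow> 'a \<Rightarrow> bool" where
  "par_rel E \<rho> u v \<longleftrightarrow> (\<exists>j k. j < k \<and> k < length \<rho> \<and> \<rho>!j = u \<and> \<rho>!k = v \<and> E v u \<and>
      (\<forall>m. j < m \<and> m < k \<longrightarrow> \<not> E v (\<rho>!m)))"

lemma ltree_par: "ltree E \<rho> x y \<longleftrightarrow> par_rel E \<rho> x y \<or> par_rel E \<rho> y x"
  unfolding ltree_def par_rel_def by blast

lemma par_prec: "par_rel E \<rho> u v \<Longrightarrow> prec \<rho> u v"
  unfolding par_rel_def prec_def by blast

lemma par_E: "par_rel E \<rho> u v \<Longrightarrow> E v u"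
  unfolding par_rel_def by blast

lemma par_set: "par_rel E \<rho> u v \<Longrightarrow> u \<in> set \<rho> \<and> v \<in> set \<rho>"
  using par_prec prec_set by metis

lemma par_nth: assumes d: "distinct \<rho>" and j: "j < length \<rho>" and k: "k < length \<rho>"
  shows "par_rel E \<rho> (\<rho>!j) (\<rho>!k) \<longleftrightarrow> j < k \<and> E (\<rho>!k) (\<rho>!j) \<and> (\<forall>m. j < m \<and> m < k \<longrightarrow> \<not> E (\<rho>!k) (\<rho>!m))"
proof
  assume "par_rel E \<rho> (\<rho>!j) (\<rho>!k)"
  then obtain j' k' where jk: "j' < k'" "k' < length \<rho>" "\<rho>!j' = \<rho>!j" "\<rho>!k' = \<rho>!k" "E (\<rho>!k) (\<rho>!j)"
      "\<forall>m. j' < m \<and> m < k' \<longrightarrow> \<not> E (\<rho>!k) (\<rho>!m)"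
    unfolding par_rel_def by blast
  have "j' < length \<rho>" using jk by simp
  then have "j' = j" using nth_eq_iff_index_eq[OF d _ j] jk(3) by simp
  moreover have "k' = k" using nth_eq_iff_index_eq[OF d jk(2) k] jk(4) by simp
  ultimately show "j < k \<and> E (\<rho>!k) (\<rho>!j) \<and> (\<forall>m. j < m \<and> m < k \<longrightarrow> \<not> E (\<rho>!k) (\<rho>!m))"
    using jk by blast
next
  assume "j < k \<and> E (\<rho>!k) (\<rho>!j) \<and> (\<forall>m. j < m \<and> m < k \<longrightarrow> \<not> E (\<rho>!k) (\<rho>!m))"
  then show "par_rel E \<rho> (\<rho>!j) (\<rho>!k)" unfolding par_rel_def using k by blast
qed

lemma par_unique: assumes d: "distinct \<rho>" and a: "par_rel E \<rho> u v" and b: "par_rel E \<rho> u' v"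
  shows "u = u'"
proof -
  obtain j k where jk: "j < k" "k < length \<rho>" "\<rho>!j = u" "\<rho>!k = v"
    using a unfolding par_rel_def by blast
  obtain j' k' where jk': "j' < k'" "k' < length \<rho>" "\<rho>!j' = u'" "\<rho>!k' = v"
    using b unfolding par_rel_def by blast
  have "k' = k" using nth_eq_iff_index_eq[OF d jk'(2) jk(2)] jk(4) jk'(4) by simp
  have j: "j < length \<rho>" "j' < length \<rho>" using jk jk' by auto
  have A: "j < k \<and> E (\<rho>!k) (\<rho>!j) \<and> (\<forall>m. j < m \<and> m < k \<longrightarrow> \<not> E (\<rho>!k) (\<rho>!m))"
    using a par_nth[OF d j(1) jk(2)] jk by simp
  have B: "j' < k \<and> E (\<rho>!k) (\<rho>!j') \<and> (\<forall>m. j' < m \<and> m < k \<longrightarrow> \<not> E (\<rho>!k) (\<rho>!m))"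
    using b par_nth[OF d j(2) jk(2)] jk jk' \<open>k' = k\<close> by simp
  have "j = j'"
  proof (rule ccontr)
    assume "j \<noteq> j'"
    then have "j < j' \<or> j' < j" by auto
    then show False using A B by blast
  qed
  then show ?thesis using jk jk' by simp
qed

lemma par_not_first: assumes d: "distinct \<rho>" shows "\<not> par_rel E \<rho> u (\<rho>!0)"
proof
  assume "par_rel E \<rho> u (\<rho>!0)"
  then obtain j k where jk: "j < k" "k < length \<rho>" "\<rho>!k = \<rho>!0"
    unfolding par_rel_def by blast
  have "0 < length \<rho>" using jk by linarith
  have "k = 0" using nth_eq_iff_index_eq[OF d jk(2) \<open>0 < length \<rho>\<close>] jk by simp
  then show False using jk by simp
qed

lemma par_exists:
  assumes d: "distinct \<rho>" and V: "set \<rho> = V" and ne: "\<rho> \<noteq> []"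
    and st: "spanning_tree V E (ltree E \<rho>)"
    and k: "0 < k" "k < length \<rho>"
  shows "\<exists>u. par_rel E \<rho> u (\<rho>!k)"
proof -
  define R where "R = {(u,v). par_rel E \<rho> u v}"
  have Rsub: "R \<subseteq> set \<rho> \<times> set \<rho>" unfolding R_def using par_set by fastforce
  then have finR: "finite R" using finite_subset by blast
  have es: "edge_set (ltree E \<rho>) = (\<lambda>(u,v). {u,v}) ` R"
  proof
    show "edge_set (ltree E \<rho>) \<subseteq> (\<lambda>(u,v). {u,v}) ` R"
    proof
      fix e assume "e \<in> edge_set (ltree E \<rho>)"
      then obtain x y where e: "e = {x,y}" "ltree E \<rho> x y" unfolding edge_set_def by blast
      then have "par_rel E \<rho> x y \<or> par_rel E \<rho> y x" using ltree_par by metis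
      then show "e \<in> (\<lambda>(u,v). {u,v}) ` R"
      proof
        assume "par_rel E \<rho> x y" then have "(x,y) \<in> R" unfolding R_def by simp
        then show ?thesis using e by force
      next
        assume "par_rel E \<rho> y x" then have "(y,x) \<in> R" unfolding R_def by simp
        moreover have "e = {y,x}" using e by auto
        ultimately show ?thesis by force
      qed
    qed
  next
    show "(\<lambda>(u,v). {u,v}) ` R \<subseteq> edge_set (ltree E \<rho>)"
    proof
      fix e assume "e \<in> (\<lambda>(u,v). {u,v}) ` R"
      then obtain u v where "e = {u,v}" "par_rel E \<rho> u v" unfolding R_def by auto
      then have "ltree E \<rho> u v" using ltree_par by metis
      then show "e \<in> edge_set (ltree E \<rho>)" unfolding edge_set_def using \<open>e = {u,v}\<close> by blast
    qed
  qed
  have inj1: "inj_on (\<lambda>(u,v). {u,v}) R"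
  proof (rule inj_onI)
    fix p q assume p: "p \<in> R" and q: "q \<in> R" and eq: "(\<lambda>(u,v). {u,v}) p = (\<lambda>(u,v). {u,v}) q"
    obtain u v where puv: "p = (u,v)" by (cases p)
    obtain u' v' where quv: "q = (u',v')" by (cases q)
    have pr: "prec \<rho> u v" "prec \<rho> u' v'" using p q puv quv par_prec unfolding R_def by auto
    have "{u,v} = {u',v'}" using eq puv quv by simp
    then have "(u = u' \<and> v = v') \<or> (u = v' \<and> v = u')" by (auto simp: doubleton_eq_iff)
    then show "p = q"
    proof
      assume "u = v' \<and> v = u'"
      then have "prec \<rho> v u" using pr by simp
      then show "p = q" using prec_asym[OF d pr(1)] by simp
    qed (simp add: puv quv)
  qed
  have inj2: "inj_on snd R"
  proof (rule inj_onI)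
    fix p q assume p: "p \<in> R" and q: "q \<in> R" and eq: "snd p = snd q"
    obtain u v where puv: "p = (u,v)" by (cases p)
    obtain u' v' where quv: "q = (u',v')" by (cases q)
    have "par_rel E \<rho> u v" "par_rel E \<rho> u' v" using p q puv quv eq unfolding R_def by auto
    then have "u = u'" using par_unique[OF d] by metis
    then show "p = q" using puv quv eq by simp
  qed
  have sub: "snd ` R \<subseteq> set \<rho> - {\<rho>!0}"
  proof
    fix v assume "v \<in> snd ` R"
    then obtain u where "par_rel E \<rho> u v" unfolding R_def by auto
    then have "v \<in> set \<rho>" "v \<noteq> \<rho>!0" using par_set[of E \<rho> u v] par_not_first[OF d, of E u] by auto
    then show "v \<in> set \<rho> - {\<rho>!0}" by simp
  qed
  have c1: "card (snd ` R) = card (edge_set (ltree E \<rho>))"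
    using es card_image[OF inj1] card_image[OF inj2] by simp
  have c2: "card (edge_set (ltree E \<rho>)) = length \<rho> - 1"
    using st V distinct_card[OF d] unfolding spanning_tree_def by simp
  have c3: "card (set \<rho> - {\<rho>!0}) = length \<rho> - 1"
    using distinct_card[OF d] ne by (simp add: card_Diff_singleton)
  have "snd ` R = set \<rho> - {\<rho>!0}"
    using card_subset_eq[OF _ sub] c1 c2 c3 by simp
  moreover have "\<rho>!k \<in> set \<rho> - {\<rho>!0}"
  proof -
    have "0 < length \<rho>" using k by linarith
    then have "\<rho>!k \<noteq> \<rho>!0" using nth_eq_iff_index_eq[OF d k(2)] k(1) by simp
    then show ?thesis using k(2) by simp
  qed
  ultimately have "\<rho>!k \<in> snd ` R" by simp
  then obtain p where "\<rho>!k = snd p" "p \<in> R" by (rule imageE)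
  then show ?thesis unfolding R_def by (cases p) auto
qed

lemma lab_less_iff:
  assumes "x \<noteq> s" "w \<noteq> s"
  shows "label_less (lexdfs_label E s \<rho> i x) (lexdfs_label E s \<rho> i w) \<longleftrightarrow>
    (\<exists>t<i. E (\<rho>!t) w \<and> \<not> E (\<rho>!t) x \<and> (\<forall>t'. t < t' \<and> t' < i \<longrightarrow> (E (\<rho>!t') x \<longleftrightarrow> E (\<rho>!t') w)))"
  using assms label_noS[of x s E \<rho> i] label_noS[of w s E \<rho> i]
    lex_filter[of "\<lambda>j. E (\<rho>!j) x" i "\<lambda>j. E (\<rho>!j) w"] by simp

lemma lex_at:
  assumes "is_lexdfs_order V E s \<rho>" "i < k" "k < length \<rho>"
  shows "\<not> label_less (lexdfs_label E s \<rho> i (\<rho>!i)) (lexdfs_label E s \<rho> i (\<rho>!k))"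
proof -
  have d: "distinct \<rho>" and V: "set \<rho> = V" using assms(1) unfolding is_lexdfs_order_def vertex_order_def by auto
  have "\<rho>!k \<notin> set (take (Suc i) \<rho>)" using nth_in_take_iff[OF d assms(3), of "Suc i"] assms(2) by simp
  moreover have "\<rho>!k \<in> V" using V assms(3) by auto
  moreover have "i < length \<rho>" using assms by simp
  ultimately show ?thesis using assms(1) unfolding is_lexdfs_order_def by blast
qed

lemma tranclp_prec:
  assumes d: "distinct \<rho>" and P: "\<And>u v. R u v \<Longrightarrow> prec \<rho> u v" and r: "R\<^sup>+\<^sup>+ a b"
  shows "prec \<rho> a b"
  using r
proof (induction rule: tranclp_induct)
  case (base y) then show ?case using P by blast
next
  case (step y z) then show ?case using P prec_trans[OF d] by blast
qed

definition D :: "('a \<Rightarrow> 'a \<Rightarrow> bool) \<Rightarrow> 'a set \<Rightarrow> ('a \<Rightarrow> bool) \<Rightarrow> ('a \<Rightarrow> bool) \<Rightarrow> bool" where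
  "D R A X Y \<longleftrightarrow> (\<exists>a\<in>A. Y a \<and> \<not> X a \<and> (\<forall>a'\<in>A. R a a' \<longrightarrow> (X a' \<longleftrightarrow> Y a')))"

locale L11 =
  fixes V :: "'a set" and E :: "'a \<Rightarrow> 'a \<Rightarrow> bool" and s :: 'a and \<sigma> \<sigma>' :: "'a list"
  assumes sg: "simple_graph V E"
    and vo: "vertex_order V \<sigma>" and hd\<sigma>: "hd \<sigma> = s" and sV: "s \<in> V"
    and lex': "is_lexdfs_order V E s \<sigma>'"
    and tr: "ltree E \<sigma>' = ltree E \<sigma>"
    and st: "spanning_tree V E (ltree E \<sigma>)"
begin

abbreviation "T \<equiv> ltree E \<sigma>"
abbreviation "P \<equiv> par_rel E \<sigma>"
abbreviation "anc x \<equiv> {a. P\<^sup>+\<^sup>+ a x}"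
abbreviation "n \<equiv> length \<sigma>"

lemma d\<sigma>: "distinct \<sigma>" and set\<sigma>: "set \<sigma> = V"
  using vo unfolding vertex_order_def by auto

lemma d\<sigma>': "distinct \<sigma>'" and set\<sigma>': "set \<sigma>' = V"
  using lex' unfolding is_lexdfs_order_def vertex_order_def by auto

lemma Esym: "E x y \<Longrightarrow> E y x" and Eirr: "\<not> E x x" and EV: "E x y \<Longrightarrow> x \<in> V \<and> y \<in> V"
  using sg unfolding simple_graph_def by blast+

lemma finV: "finite V"
  using sg unfolding simple_graph_def by blast

lemma \<sigma>ne: "\<sigma> \<noteq> []" using set\<sigma> sV by auto
lemma \<sigma>'ne: "\<sigma>' \<noteq> []" using set\<sigma>' sV by auto
lemma n_pos: "0 < n" using \<sigma>ne by simp
lemma n'_pos: "0 < length \<sigma>'" using \<sigma>'ne by simp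

lemma \<sigma>0: "\<sigma>!0 = s" using hd\<sigma> \<sigma>ne by (simp add: hd_conv_nth)

lemma \<sigma>'0: "\<sigma>'!0 = s"
proof (rule ccontr)
  assume ne: "\<sigma>'!0 \<noteq> s"
  have "s \<in> set \<sigma>'" using set\<sigma>' sV by simp
  then obtain k where k: "k < length \<sigma>'" "\<sigma>'!k = s" by (auto simp: in_set_conv_nth)
  then have "k \<noteq> 0" using ne by (cases k) auto
  then have "\<not> label_less (lexdfs_label E s \<sigma>' 0 (\<sigma>'!0)) (lexdfs_label E s \<sigma>' 0 (\<sigma>'!k))"
    using lex_at[OF lex', of 0 k] k by simp
  moreover have "lexdfs_label E s \<sigma>' 0 (\<sigma>'!0) = []" using ne by (simp add: lexdfs_label_def)
  moreover have "lexdfs_label E s \<sigma>' 0 (\<sigma>'!k) = [0]" using k by (simp add: lexdfs_label_def)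
  ultimately show False by (simp add: label_less_def)
qed

lemma T_iff: "T x y \<longleftrightarrow> P x y \<or> P y x"
  by (rule ltree_par)

lemma P_prec: "P u v \<Longrightarrow> prec \<sigma> u v" by (rule par_prec)
lemma P_E: "P u v \<Longrightarrow> E u v" using par_E Esym by metis
lemma P_V: "P u v \<Longrightarrow> u \<in> V \<and> v \<in> V" using par_set set\<sigma> by metis
lemma P_unique: "P u v \<Longrightarrow> P u' v \<Longrightarrow> u = u'" using par_unique[OF d\<sigma>] by metis
lemma P_not_s: "\<not> P u s" using par_not_first[OF d\<sigma>] \<sigma>0 by metis

lemma P_exists: assumes "k < n" "0 < k" shows "\<exists>u. P u (\<sigma>!k)"
  using par_exists[OF d\<sigma> set\<sigma> \<sigma>ne st assms(2,1)] .

lemma P_exists_v: assumes "v \<in> V" "v \<noteq> s" shows "\<exists>u. P u v"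
proof -
  obtain k where k: "k < n" "\<sigma>!k = v" using assms set\<sigma> by (auto simp: in_set_conv_nth)
  then have "k \<noteq> 0" using assms \<sigma>0 by (cases k) auto
  then show ?thesis using P_exists[of k] k by auto
qed

lemma P_nth: "j < n \<Longrightarrow> k < n \<Longrightarrow> P (\<sigma>!j) (\<sigma>!k) \<longleftrightarrow> j < k \<and> E (\<sigma>!k) (\<sigma>!j) \<and> (\<forall>m. j < m \<and> m < k \<longrightarrow> \<not> E (\<sigma>!k) (\<sigma>!m))"
  by (rule par_nth[OF d\<sigma>])

lemma P'_exists: assumes "k < length \<sigma>'" "0 < k" shows "\<exists>u. par_rel E \<sigma>' u (\<sigma>'!k)"
  using par_exists[OF d\<sigma>' set\<sigma>' \<sigma>'ne _ assms(2,1)] st tr by simp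

lemma P_eq_aux: "k < n \<Longrightarrow> par_rel E \<sigma>' u (\<sigma>!k) \<longleftrightarrow> P u (\<sigma>!k)"
proof (induction k arbitrary: u rule: less_induct)
  case (less k)
  show ?case
  proof (cases "k = 0")
    case True
    then show ?thesis using par_not_first[OF d\<sigma>'] \<sigma>'0 P_not_s \<sigma>0 by metis
  next
    case False
    then obtain p where p: "P p (\<sigma>!k)" using P_exists[of k] less.prems by auto
    have "T p (\<sigma>!k)" using p T_iff by blast
    then have "ltree E \<sigma>' p (\<sigma>!k)" using tr by simp
    then have "par_rel E \<sigma>' p (\<sigma>!k) \<or> par_rel E \<sigma>' (\<sigma>!k) p" using ltree_par by metis
    moreover have "\<not> par_rel E \<sigma>' (\<sigma>!k) p"
    proof
      assume a: "par_rel E \<sigma>' (\<sigma>!k) p"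
      have "prec \<sigma> p (\<sigma>!k)" using p P_prec by blast
      then obtain j where j: "j < k" "\<sigma>!j = p"
        using prec_nth_iff[OF d\<sigma>] less.prems unfolding prec_def
        by (metis nth_eq_iff_index_eq[OF d\<sigma>] less_trans)
      have "p \<noteq> s" using a par_not_first[OF d\<sigma>'] \<sigma>'0 by metis
      then have "j \<noteq> 0" using j \<sigma>0 by (cases j) auto
      then obtain q where q: "P q p" using P_exists[of j] j less.prems by auto
      have "par_rel E \<sigma>' q p" using less.IH[of j q] j less.prems q by simp
      then have "q = \<sigma>!k" using par_unique[OF d\<sigma>' a] by simp
      then have "prec \<sigma> (\<sigma>!k) p" using q P_prec by simp
      then show False using prec_asym[OF d\<sigma> \<open>prec \<sigma> p (\<sigma>!k)\<close>] by simp
    qed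
    ultimately have p': "par_rel E \<sigma>' p (\<sigma>!k)" by blast
    show ?thesis
    proof
      assume "par_rel E \<sigma>' u (\<sigma>!k)"
      then have "u = p" using par_unique[OF d\<sigma>' _ p'] by blast
      then show "P u (\<sigma>!k)" using p by simp
    next
      assume "P u (\<sigma>!k)"
      then have "u = p" using P_unique p by blast
      then show "par_rel E \<sigma>' u (\<sigma>!k)" using p' by simp
    qed
  qed
qed

lemma P_eq: "par_rel E \<sigma>' u v \<longleftrightarrow> P u v"
proof (cases "v \<in> V")
  case True
  then obtain k where "k < n" "\<sigma>!k = v" using set\<sigma> by (auto simp: in_set_conv_nth)
  then show ?thesis using P_eq_aux by blast
next
  case False
  then show ?thesis using par_set set\<sigma> set\<sigma>' by metis
qed

lemma P_prec': "P u v \<Longrightarrow> prec \<sigma>' u v" using P_eq par_prec by metis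

end

context L11
begin

lemma anc_prec: "P\<^sup>+\<^sup>+ a b \<Longrightarrow> prec \<sigma> a b"
  using tranclp_prec[OF d\<sigma>, of P] P_prec by blast

lemma anc_prec': "P\<^sup>+\<^sup>+ a b \<Longrightarrow> prec \<sigma>' a b"
  using tranclp_prec[OF d\<sigma>', of P] P_prec' by blast

lemma anc_V: "P\<^sup>+\<^sup>+ a b \<Longrightarrow> a \<in> V \<and> b \<in> V"
  using anc_prec prec_set set\<sigma> by metis

lemma anc_irrefl: "\<not> P\<^sup>+\<^sup>+ a a"
  using anc_prec prec_irrefl[OF d\<sigma>] by metis

lemma anc_asym: "P\<^sup>+\<^sup>+ a b \<Longrightarrow> \<not> P\<^sup>+\<^sup>+ b a"
  using anc_prec prec_asym[OF d\<sigma>] by metis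

lemma anc_chain_aux: "P\<^sup>+\<^sup>+ a x \<Longrightarrow> \<forall>b. P\<^sup>+\<^sup>+ b x \<longrightarrow> a = b \<or> P\<^sup>+\<^sup>+ a b \<or> P\<^sup>+\<^sup>+ b a"
proof (induction rule: tranclp_induct)
  case (base y)
  show ?case
  proof (intro allI impI)
    fix b assume "P\<^sup>+\<^sup>+ b y"
    then show "a = b \<or> P\<^sup>+\<^sup>+ a b \<or> P\<^sup>+\<^sup>+ b a"
    proof (cases rule: tranclp.cases)
      case r_into_trancl
      then show ?thesis using P_unique base by blast
    next
      case (trancl_into_trancl c)
      then have "c = a" using P_unique base by blast
      then show ?thesis using trancl_into_trancl by blast
    qed
  qed
next
  case (step y z)
  show ?case
  proof (intro allI impI)
    fix b assume "P\<^sup>+\<^sup>+ b z"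
    then show "a = b \<or> P\<^sup>+\<^sup>+ a b \<or> P\<^sup>+\<^sup>+ b a"
    proof (cases rule: tranclp.cases)
      case r_into_trancl
      then have "b = y" using P_unique step by blast
      then show ?thesis using step by blast
    next
      case (trancl_into_trancl c)
      then have "c = y" using P_unique step by blast
      then show ?thesis using step.IH trancl_into_trancl by blast
    qed
  qed
qed

lemma anc_chain: "P\<^sup>+\<^sup>+ a x \<Longrightarrow> P\<^sup>+\<^sup>+ b x \<Longrightarrow> a = b \<or> P\<^sup>+\<^sup>+ a b \<or> P\<^sup>+\<^sup>+ b a"
  using anc_chain_aux by blast

lemma anc_child: assumes "P p x" shows "P\<^sup>+\<^sup>+ a x \<longleftrightarrow> a = p \<or> P\<^sup>+\<^sup>+ a p"
proof
  assume "P\<^sup>+\<^sup>+ a x"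
  then show "a = p \<or> P\<^sup>+\<^sup>+ a p"
  proof (cases rule: tranclp.cases)
    case r_into_trancl
    then show ?thesis using P_unique assms by blast
  next
    case (trancl_into_trancl c)
    then have "c = p" using P_unique assms by blast
    then show ?thesis using trancl_into_trancl by blast
  qed
next
  assume "a = p \<or> P\<^sup>+\<^sup>+ a p"
  then show "P\<^sup>+\<^sup>+ a x" using assms by (meson tranclp.r_into_trancl tranclp.trancl_into_trancl)
qed

lemma anc_sib: "P p x \<Longrightarrow> P p y \<Longrightarrow> anc x = anc y"
  using anc_child by blast

lemma finite_anc: "finite (anc x)"
proof -
  have "anc x \<subseteq> V" using anc_V by blast
  then show ?thesis using finV finite_subset by blast
qed

lemma idx\<sigma>': "v \<in> V \<Longrightarrow> \<exists>k < length \<sigma>'. \<sigma>'!k = v"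
  using set\<sigma>' by (auto simp: in_set_conv_nth)

lemma nz_not_s': "k < length \<sigma>' \<Longrightarrow> 0 < k \<Longrightarrow> \<sigma>'!k \<noteq> s"
  using nth_eq_iff_index_eq[OF d\<sigma>', of k 0] \<sigma>'0 n'_pos by auto

lemma nz_not_s: "k < n \<Longrightarrow> 0 < k \<Longrightarrow> \<sigma>!k \<noteq> s"
  using nth_eq_iff_index_eq[OF d\<sigma>, of k 0] \<sigma>0 n_pos by auto

lemma P'_nth: "j < length \<sigma>' \<Longrightarrow> k < length \<sigma>' \<Longrightarrow>
  P (\<sigma>'!j) (\<sigma>'!k) \<longleftrightarrow> j < k \<and> E (\<sigma>'!k) (\<sigma>'!j) \<and> (\<forall>m. j < m \<and> m < k \<longrightarrow> \<not> E (\<sigma>'!k) (\<sigma>'!m))"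
  using par_nth[OF d\<sigma>'] P_eq by metis

lemma P'_par: assumes "k < length \<sigma>'" "0 < k"
  obtains j where "j < k" "P (\<sigma>'!j) (\<sigma>'!k)" "E (\<sigma>'!k) (\<sigma>'!j)" "\<forall>m. j < m \<and> m < k \<longrightarrow> \<not> E (\<sigma>'!k) (\<sigma>'!m)"
proof -
  obtain u where u: "P u (\<sigma>'!k)" using P'_exists[OF assms] P_eq by metis
  have "prec \<sigma>' u (\<sigma>'!k)" using u P_prec' by blast
  then have "u \<in> set \<sigma>'" using prec_set by metis
  then obtain j where j: "j < length \<sigma>'" "\<sigma>'!j = u" by (auto simp: in_set_conv_nth)
  then show ?thesis using that u P'_nth[OF j(1) assms(1)] by blast
qed

lemma claimA5:
  "m < j \<Longrightarrow> j < k \<Longrightarrow> k < length \<sigma>' \<Longrightarrow> P\<^sup>+\<^sup>+ (\<sigma>'!j) (\<sigma>'!k) \<Longrightarrow> E (\<sigma>'!m) (\<sigma>'!k) \<Longrightarrow>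
   P\<^sup>*\<^sup>* (\<sigma>'!m) (\<sigma>'!j)"
proof (induction j rule: less_induct)
  case (less j)
  have jl: "j < length \<sigma>'" using less.prems by simp
  obtain j' where j': "j' < j" "P (\<sigma>'!j') (\<sigma>'!j)" "E (\<sigma>'!j) (\<sigma>'!j')"
      "\<forall>m. j' < m \<and> m < j \<longrightarrow> \<not> E (\<sigma>'!j) (\<sigma>'!m)"
    using P'_par[OF jl] less.prems by (metis gr_zeroI not_less0)
  have "m \<le> j'"
  proof (rule ccontr)
    assume "\<not> m \<le> j'"
    then have mj': "j' < m" by simp
    define Ts where "Ts = {t. t < j \<and> E (\<sigma>'!t) (\<sigma>'!k)}"
    have finT: "finite Ts" unfolding Ts_def by simp
    have mT: "m \<in> Ts" unfolding Ts_def using less.prems by simp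
    define t0 where "t0 = Max Ts"
    have t0T: "t0 \<in> Ts" unfolding t0_def using finT mT Max_in by blast
    have t0ge: "m \<le> t0" unfolding t0_def using finT mT Max_ge by blast
    have t0max: "\<And>t. t \<in> Ts \<Longrightarrow> t \<le> t0" unfolding t0_def using finT Max_ge by blast
    have A: "t0 < j" "E (\<sigma>'!t0) (\<sigma>'!k)" using t0T unfolding Ts_def by auto
    have B: "\<not> E (\<sigma>'!t0) (\<sigma>'!j)" using j'(4) mj' t0ge A(1) Esym by fastforce
    have C: "\<forall>t'. t0 < t' \<and> t' < j \<longrightarrow> (E (\<sigma>'!t') (\<sigma>'!j) \<longleftrightarrow> E (\<sigma>'!t') (\<sigma>'!k))"
    proof (intro allI impI)
      fix t' assume t': "t0 < t' \<and> t' < j"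
      have "\<not> E (\<sigma>'!t') (\<sigma>'!j)" using j'(4) mj' t0ge t' Esym by fastforce
      moreover have "\<not> E (\<sigma>'!t') (\<sigma>'!k)"
      proof
        assume "E (\<sigma>'!t') (\<sigma>'!k)"
        then have "t' \<in> Ts" using t' unfolding Ts_def by simp
        then show False using t0max t' by fastforce
      qed
      ultimately show "E (\<sigma>'!t') (\<sigma>'!j) \<longleftrightarrow> E (\<sigma>'!t') (\<sigma>'!k)" by blast
    qed
    have ns: "\<sigma>'!j \<noteq> s" "\<sigma>'!k \<noteq> s" using nz_not_s' less.prems by auto
    have "label_less (lexdfs_label E s \<sigma>' j (\<sigma>'!j)) (lexdfs_label E s \<sigma>' j (\<sigma>'!k))"
      using lab_less_iff[OF ns] A B C by blast
    then show False using lex_at[OF lex', of j k] less.prems by simp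
  qed
  show ?case
  proof (cases "m = j'")
    case True
    then show ?thesis using j'(2) by blast
  next
    case False
    then have "m < j'" using \<open>m \<le> j'\<close> by simp
    have "P\<^sup>+\<^sup>+ (\<sigma>'!j') (\<sigma>'!k)" using j'(2) less.prems(4) by (meson tranclp_into_tranclp2)
    then have "P\<^sup>*\<^sup>* (\<sigma>'!m) (\<sigma>'!j')" using less.IH[of j'] j'(1) \<open>m < j'\<close> less.prems by simp
    then show ?thesis using j'(2) by (meson rtranclp.rtrancl_into_rtrancl)
  qed
qed

lemma A5': assumes "m < k" "k < length \<sigma>'" "E (\<sigma>'!m) (\<sigma>'!k)"
  shows "P\<^sup>+\<^sup>+ (\<sigma>'!m) (\<sigma>'!k)"
proof -
  obtain j where j: "j < k" "P (\<sigma>'!j) (\<sigma>'!k)" "\<forall>m. j < m \<and> m < k \<longrightarrow> \<not> E (\<sigma>'!k) (\<sigma>'!m)"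
    using P'_par[OF assms(2)] assms(1) by (metis gr_zeroI not_less0)
  have "m \<le> j" using j(3) assms Esym by (meson not_le)
  show ?thesis
  proof (cases "m = j")
    case True then show ?thesis using j by blast
  next
    case False
    then have "m < j" using \<open>m \<le> j\<close> by simp
    have "P\<^sup>*\<^sup>* (\<sigma>'!m) (\<sigma>'!j)" using claimA5[OF \<open>m < j\<close> j(1) assms(2)] j(2) assms(3) by blast
    then show ?thesis using j(2) by (rule rtranclp_into_tranclp1)
  qed
qed

lemma A5: assumes "E a b" shows "P\<^sup>+\<^sup>+ a b \<or> P\<^sup>+\<^sup>+ b a"
proof -
  obtain i where i: "i < length \<sigma>'" "\<sigma>'!i = a" using idx\<sigma>' EV assms by blast
  obtain k where k: "k < length \<sigma>'" "\<sigma>'!k = b" using idx\<sigma>' EV assms by blast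
  have "i \<noteq> k" using i k assms Eirr by auto
  then have "i < k \<or> k < i" by auto
  then show ?thesis
  proof
    assume "i < k" then show ?thesis using A5' i k assms by blast
  next
    assume "k < i" then show ?thesis using A5'[of k i] i k assms Esym by blast
  qed
qed

end

context L11
begin

lemma GT:
  assumes d\<rho>: "distinct \<rho>" and V\<rho>: "set \<rho> = V" and \<rho>0: "\<rho>!0 = s"
    and P\<rho>: "\<And>u v. P u v \<Longrightarrow> prec \<rho> u v"
    and k: "0 < k" "k < l" "l < length \<rho>"
    and H: "\<forall>t<k. E (\<rho>!t) (\<rho>!l) \<longrightarrow> P\<^sup>+\<^sup>+ (\<rho>!t) (\<rho>!k)"
  shows "label_less (lexdfs_label E s \<rho> k (\<rho>!k)) (lexdfs_label E s \<rho> k (\<rho>!l)) \<longleftrightarrow>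
         D (P\<^sup>+\<^sup>+) (anc (\<rho>!k)) (\<lambda>a. E a (\<rho>!k)) (\<lambda>a. E a (\<rho>!l))"
proof -
  have kl: "k < length \<rho>" using k by simp
  have pos: "0 < length \<rho>" using k by linarith
  have ns: "\<rho>!k \<noteq> s" "\<rho>!l \<noteq> s"
    using nth_eq_iff_index_eq[OF d\<rho> kl pos] nth_eq_iff_index_eq[OF d\<rho> k(3) pos] \<rho>0 k by auto
  have Pr: "\<And>a b. P\<^sup>+\<^sup>+ a b \<Longrightarrow> prec \<rho> a b" using tranclp_prec[OF d\<rho>, of P] P\<rho> by blast
  have idx: "\<And>a. a \<in> V \<Longrightarrow> \<exists>t < length \<rho>. \<rho>!t = a" using V\<rho> by (auto simp: in_set_conv_nth)
  show ?thesis
    unfolding lab_less_iff[OF ns] D_def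
  proof
    assume "\<exists>t<k. E (\<rho>!t) (\<rho>!l) \<and> \<not> E (\<rho>!t) (\<rho>!k) \<and> (\<forall>t'. t < t' \<and> t' < k \<longrightarrow> (E (\<rho>!t') (\<rho>!k) \<longleftrightarrow> E (\<rho>!t') (\<rho>!l)))"
    then obtain t where t: "t < k" "E (\<rho>!t) (\<rho>!l)" "\<not> E (\<rho>!t) (\<rho>!k)"
      "\<forall>t'. t < t' \<and> t' < k \<longrightarrow> (E (\<rho>!t') (\<rho>!k) \<longleftrightarrow> E (\<rho>!t') (\<rho>!l))" by blast
    have ta: "\<rho>!t \<in> anc (\<rho>!k)" using H t by blast
    have "\<forall>a'\<in>anc (\<rho>!k). P\<^sup>+\<^sup>+ (\<rho>!t) a' \<longrightarrow> (E a' (\<rho>!k) \<longleftrightarrow> E a' (\<rho>!l))"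
    proof (intro ballI impI)
      fix a' assume a': "a' \<in> anc (\<rho>!k)" "P\<^sup>+\<^sup>+ (\<rho>!t) a'"
      have "a' \<in> V" using a' anc_V by blast
      then obtain t' where t': "t' < length \<rho>" "\<rho>!t' = a'" using idx by blast
      have tl: "t < length \<rho>" using t kl by simp
      have "prec \<rho> (\<rho>!t) (\<rho>!t')" using Pr a' t' by blast
      then have "t < t'" using prec_nth_iff[OF d\<rho> tl t'(1)] by blast
      moreover have "prec \<rho> (\<rho>!t') (\<rho>!k)" using Pr a' t' by blast
      then have "t' < k" using prec_nth_iff[OF d\<rho> t'(1) kl] by blast
      ultimately show "E a' (\<rho>!k) \<longleftrightarrow> E a' (\<rho>!l)" using t(4) t' by blast
    qed
    then show "\<exists>a\<in>anc (\<rho>!k). E a (\<rho>!l) \<and> \<not> E a (\<rho>!k) \<and> (\<forall>a'\<in>anc (\<rho>!k). P\<^sup>+\<^sup>+ a a' \<longrightarrow> (E a' (\<rho>!k) \<longleftrightarrow> E a' (\<rho>!l)))"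
      using ta t by blast
  next
    assume "\<exists>a\<in>anc (\<rho>!k). E a (\<rho>!l) \<and> \<not> E a (\<rho>!k) \<and> (\<forall>a'\<in>anc (\<rho>!k). P\<^sup>+\<^sup>+ a a' \<longrightarrow> (E a' (\<rho>!k) \<longleftrightarrow> E a' (\<rho>!l)))"
    then obtain a where a: "P\<^sup>+\<^sup>+ a (\<rho>!k)" "E a (\<rho>!l)" "\<not> E a (\<rho>!k)"
      "\<forall>a'\<in>anc (\<rho>!k). P\<^sup>+\<^sup>+ a a' \<longrightarrow> (E a' (\<rho>!k) \<longleftrightarrow> E a' (\<rho>!l))" by blast
    have "a \<in> V" using a anc_V by blast
    then obtain t where t: "t < length \<rho>" "\<rho>!t = a" using idx by blast
    have "prec \<rho> (\<rho>!t) (\<rho>!k)" using Pr a t by blast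
    then have tk: "t < k" using prec_nth_iff[OF d\<rho> t(1) kl] by blast
    have "\<forall>t'. t < t' \<and> t' < k \<longrightarrow> (E (\<rho>!t') (\<rho>!k) \<longleftrightarrow> E (\<rho>!t') (\<rho>!l))"
    proof (intro allI impI)
      fix t' assume t': "t < t' \<and> t' < k"
      have t'l: "t' < length \<rho>" using t' kl by simp
      show "E (\<rho>!t') (\<rho>!k) \<longleftrightarrow> E (\<rho>!t') (\<rho>!l)"
      proof (rule ccontr)
        assume ne: "\<not> (E (\<rho>!t') (\<rho>!k) \<longleftrightarrow> E (\<rho>!t') (\<rho>!l))"
        have inA: "P\<^sup>+\<^sup>+ (\<rho>!t') (\<rho>!k)"
        proof (cases "E (\<rho>!t') (\<rho>!k)")
          case True
          then have "P\<^sup>+\<^sup>+ (\<rho>!t') (\<rho>!k) \<or> P\<^sup>+\<^sup>+ (\<rho>!k) (\<rho>!t')" using A5 by blast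
          moreover have "\<not> P\<^sup>+\<^sup>+ (\<rho>!k) (\<rho>!t')"
          proof
            assume "P\<^sup>+\<^sup>+ (\<rho>!k) (\<rho>!t')"
            then have "prec \<rho> (\<rho>!k) (\<rho>!t')" using Pr by blast
            then show False using prec_nth_iff[OF d\<rho> kl t'l] t' by simp
          qed
          ultimately show ?thesis by blast
        next
          case False
          then have "E (\<rho>!t') (\<rho>!l)" using ne by blast
          then show ?thesis using H t' by blast
        qed
        have "a = \<rho>!t' \<or> P\<^sup>+\<^sup>+ a (\<rho>!t') \<or> P\<^sup>+\<^sup>+ (\<rho>!t') a" using anc_chain[OF a(1) inA] .
        moreover have "a \<noteq> \<rho>!t'" using nth_eq_iff_index_eq[OF d\<rho> t(1) t'l] t t' by simp
        moreover have "\<not> P\<^sup>+\<^sup>+ (\<rho>!t') a"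
        proof
          assume "P\<^sup>+\<^sup>+ (\<rho>!t') a"
          then have "prec \<rho> (\<rho>!t') (\<rho>!t)" using Pr t by blast
          then show False using prec_nth_iff[OF d\<rho> t'l t(1)] t' by simp
        qed
        ultimately have "P\<^sup>+\<^sup>+ a (\<rho>!t')" by blast
        then show False using a(4) inA ne by blast
      qed
    qed
    then show "\<exists>t<k. E (\<rho>!t) (\<rho>!l) \<and> \<not> E (\<rho>!t) (\<rho>!k) \<and> (\<forall>t'. t < t' \<and> t' < k \<longrightarrow> (E (\<rho>!t') (\<rho>!k) \<longleftrightarrow> E (\<rho>!t') (\<rho>!l)))"
      using tk t a by blast
  qed
qed

lemma H_desc:
  assumes d\<rho>: "distinct \<rho>" and P\<rho>: "\<And>u v. P u v \<Longrightarrow> prec \<rho> u v"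
    and k: "k < length \<rho>" "l < length \<rho>" and xw: "P\<^sup>+\<^sup>+ (\<rho>!k) (\<rho>!l)"
  shows "\<forall>t<k. E (\<rho>!t) (\<rho>!l) \<longrightarrow> P\<^sup>+\<^sup>+ (\<rho>!t) (\<rho>!k)"
proof (intro allI impI)
  fix t assume t: "t < k" "E (\<rho>!t) (\<rho>!l)"
  have Pr: "\<And>a b. P\<^sup>+\<^sup>+ a b \<Longrightarrow> prec \<rho> a b" using tranclp_prec[OF d\<rho>, of P] P\<rho> by blast
  have tl: "t < length \<rho>" using t k by simp
  have kl: "k < l" using Pr[OF xw] prec_nth_iff[OF d\<rho> k] by simp
  have "P\<^sup>+\<^sup>+ (\<rho>!t) (\<rho>!l) \<or> P\<^sup>+\<^sup>+ (\<rho>!l) (\<rho>!t)" using A5 t by blast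
  moreover have "\<not> P\<^sup>+\<^sup>+ (\<rho>!l) (\<rho>!t)"
  proof
    assume "P\<^sup>+\<^sup>+ (\<rho>!l) (\<rho>!t)"
    then have "prec \<rho> (\<rho>!l) (\<rho>!t)" using Pr by blast
    then show False using prec_nth_iff[OF d\<rho> k(2) tl] t kl by simp
  qed
  ultimately have tw: "P\<^sup>+\<^sup>+ (\<rho>!t) (\<rho>!l)" by blast
  have "\<rho>!t = \<rho>!k \<or> P\<^sup>+\<^sup>+ (\<rho>!t) (\<rho>!k) \<or> P\<^sup>+\<^sup>+ (\<rho>!k) (\<rho>!t)" using anc_chain[OF tw xw] .
  moreover have "\<rho>!t \<noteq> \<rho>!k" using nth_eq_iff_index_eq[OF d\<rho> tl k(1)] t by simp
  moreover have "\<not> P\<^sup>+\<^sup>+ (\<rho>!k) (\<rho>!t)"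
  proof
    assume "P\<^sup>+\<^sup>+ (\<rho>!k) (\<rho>!t)"
    then have "prec \<rho> (\<rho>!k) (\<rho>!t)" using Pr by blast
    then show False using prec_nth_iff[OF d\<rho> k(1) tl] t by simp
  qed
  ultimately show "P\<^sup>+\<^sup>+ (\<rho>!t) (\<rho>!k)" by blast
qed

lemma D_antisym: assumes "D (P\<^sup>+\<^sup>+) (anc x) X Y" shows "\<not> D (P\<^sup>+\<^sup>+) (anc x) Y X"
proof
  assume "D (P\<^sup>+\<^sup>+) (anc x) Y X"
  then obtain b where b: "P\<^sup>+\<^sup>+ b x" "X b" "\<not> Y b" "\<forall>a'\<in>anc x. P\<^sup>+\<^sup>+ b a' \<longrightarrow> (Y a' \<longleftrightarrow> X a')"
    unfolding D_def by blast
  obtain a where a: "P\<^sup>+\<^sup>+ a x" "Y a" "\<not> X a" "\<forall>a'\<in>anc x. P\<^sup>+\<^sup>+ a a' \<longrightarrow> (X a' \<longleftrightarrow> Y a')"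
    using assms unfolding D_def by blast
  have "a = b \<or> P\<^sup>+\<^sup>+ a b \<or> P\<^sup>+\<^sup>+ b a" using anc_chain[OF a(1) b(1)] .
  then show False using a b by blast
qed

lemma anc_card_mono: assumes "P\<^sup>+\<^sup>+ b b'" shows "card (anc b) < card (anc b')"
proof -
  have "anc b \<subseteq> anc b'" using assms by (auto intro: tranclp_trans)
  moreover have "b \<in> anc b'" "b \<notin> anc b" using assms anc_irrefl by auto
  ultimately have "anc b \<subset> anc b'" by blast
  then show ?thesis using psubset_card_mono[OF finite_anc] by blast
qed

lemma D_trans: assumes "\<not> D (P\<^sup>+\<^sup>+) (anc x) X Y" "\<not> D (P\<^sup>+\<^sup>+) (anc x) Y Z"
  shows "\<not> D (P\<^sup>+\<^sup>+) (anc x) X Z"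
proof
  assume "D (P\<^sup>+\<^sup>+) (anc x) X Z"
  then obtain a where a: "P\<^sup>+\<^sup>+ a x" "Z a" "\<not> X a" "\<forall>a'\<in>anc x. P\<^sup>+\<^sup>+ a a' \<longrightarrow> (X a' \<longleftrightarrow> Z a')"
    unfolding D_def by blast
  define B where "B = {b \<in> anc x. (b = a \<or> P\<^sup>+\<^sup>+ a b) \<and> \<not> ((X b \<longleftrightarrow> Y b) \<and> (Y b \<longleftrightarrow> Z b))}"
  have aB: "a \<in> B" unfolding B_def using a by auto
  have finB: "finite B" unfolding B_def using finite_anc[of x] by auto
  define m where "m = Max ((\<lambda>b. card (anc b)) ` B)"
  have "m \<in> (\<lambda>b. card (anc b)) ` B" unfolding m_def using finB aB by (intro Max_in) auto
  then obtain b where bB: "b \<in> B" "card (anc b) = m" by blast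
  have bmax: "\<And>b'. b' \<in> B \<Longrightarrow> card (anc b') \<le> m" unfolding m_def using finB by auto
  have deeper: "\<forall>a'\<in>anc x. P\<^sup>+\<^sup>+ b a' \<longrightarrow> ((X a' \<longleftrightarrow> Y a') \<and> (Y a' \<longleftrightarrow> Z a'))"
  proof (intro ballI impI)
    fix a' assume a': "a' \<in> anc x" "P\<^sup>+\<^sup>+ b a'"
    have "card (anc b) < card (anc a')" using anc_card_mono[OF a'(2)] .
    then have "a' \<notin> B" using bmax bB by fastforce
    moreover have "a' = a \<or> P\<^sup>+\<^sup>+ a a'" using bB a'(2) unfolding B_def by (auto intro: tranclp_trans)
    ultimately show "(X a' \<longleftrightarrow> Y a') \<and> (Y a' \<longleftrightarrow> Z a')" using a' unfolding B_def by blast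
  qed
  have bx: "P\<^sup>+\<^sup>+ b x" and bdiff: "\<not> ((X b \<longleftrightarrow> Y b) \<and> (Y b \<longleftrightarrow> Z b))" and ba: "b = a \<or> P\<^sup>+\<^sup>+ a b"
    using bB unfolding B_def by auto
  have XZ: "\<not> X b \<and> Z b \<or> (X b \<longleftrightarrow> Z b)" using ba a bx by blast
  show False
  proof (cases "Y b")
    case True
    then have "\<not> X b" using XZ bdiff by blast
    then have "D (P\<^sup>+\<^sup>+) (anc x) X Y" unfolding D_def using True bx deeper by blast
    then show False using assms by blast
  next
    case False
    then have "Z b" using XZ bdiff by blast
    then have "D (P\<^sup>+\<^sup>+) (anc x) Y Z" unfolding D_def using False bx deeper by blast
    then show False using assms by blast
  qed
qed

end

section \<open>Refinement\<close>

lemma refine_Nil[simp]: "refine [] S = []"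
  by (simp add: refine_def)

lemma refine_Cons: "refine (X#Q) S = (if X \<inter> S \<noteq> {} \<and> X - S \<noteq> {} then [X \<inter> S, X - S] else [X]) @ refine Q S"
  by (simp add: refine_def)

lemma refine_mem: "X' \<in> set (refine Q S) \<Longrightarrow> \<exists>X\<in>set Q. X' \<subseteq> X \<and> (X' \<subseteq> S \<or> X' \<inter> S = {})"
proof (induction Q)
  case Nil then show ?case by simp
next
  case (Cons X Q)
  show ?case
  proof (cases "X' \<in> set (refine Q S)")
    case True then show ?thesis using Cons.IH by auto
  next
    case False
    then have "X' \<in> set (if X \<inter> S \<noteq> {} \<and> X - S \<noteq> {} then [X \<inter> S, X - S] else [X])"
      using Cons.prems by (simp add: refine_Cons)
    then have "X' \<subseteq> X \<and> (X' \<subseteq> S \<or> X' \<inter> S = {})" by (auto split: if_splits)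
    then show ?thesis by auto
  qed
qed

lemma refine_prec: "prec (refine Q S) X' Y' \<Longrightarrow>
   \<exists>X Y. X' \<subseteq> X \<and> Y' \<subseteq> Y \<and> (prec Q X Y \<or> (X = Y \<and> X \<in> set Q \<and> X' \<subseteq> S \<and> Y' \<inter> S = {}))"
proof (induction Q)
  case Nil then show ?case by simp
next
  case (Cons X Q)
  define C where "C = (if X \<inter> S \<noteq> {} \<and> X - S \<noteq> {} then [X \<inter> S, X - S] else [X])"
  have CX: "\<forall>Z\<in>set C. Z \<subseteq> X" unfolding C_def by auto
  have "prec (C @ refine Q S) X' Y'" using Cons.prems by (simp add: refine_Cons C_def)
  then have "prec C X' Y' \<or> prec (refine Q S) X' Y' \<or> (X' \<in> set C \<and> Y' \<in> set (refine Q S))"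
    by (simp add: prec_append)
  then show ?case
  proof (elim disjE)
    assume pc: "prec C X' Y'"
    then have "X \<inter> S \<noteq> {} \<and> X - S \<noteq> {}" unfolding C_def by (auto split: if_splits simp: prec_Cons)
    then have "X' = X \<inter> S \<and> Y' = X - S" using pc unfolding C_def by (auto simp: prec_Cons)
    then show ?thesis by (intro exI[of _ X] exI[of _ X]) auto
  next
    assume "prec (refine Q S) X' Y'"
    then obtain X0 Y0 where "X' \<subseteq> X0 \<and> Y' \<subseteq> Y0 \<and> (prec Q X0 Y0 \<or> (X0 = Y0 \<and> X0 \<in> set Q \<and> X' \<subseteq> S \<and> Y' \<inter> S = {}))"
      using Cons.IH by blast
    then show ?thesis by (intro exI[of _ X0] exI[of _ Y0]) (auto simp: prec_Cons)
  next
    assume a: "X' \<in> set C \<and> Y' \<in> set (refine Q S)"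
    then obtain Y where "Y \<in> set Q" "Y' \<subseteq> Y" using refine_mem by blast
    moreover have "X' \<subseteq> X" using a CX by blast
    ultimately show ?thesis by (intro exI[of _ X] exI[of _ Y]) (auto simp: prec_Cons)
  qed
qed

lemma fold_refine:
  fixes Ss :: "'a set list" and V :: "'a set"
  defines "Q \<equiv> fold (\<lambda>S Q. refine Q S) Ss [V]"
  shows "(\<forall>X\<in>set Q. \<forall>x\<in>X. \<forall>y\<in>X. \<forall>t<length Ss. (x \<in> Ss!t \<longleftrightarrow> y \<in> Ss!t)) \<and>
         (\<forall>X Y x y. prec Q X Y \<longrightarrow> x \<in> X \<longrightarrow> y \<in> Y \<longrightarrow>
            (\<exists>t<length Ss. x \<in> Ss!t \<and> y \<notin> Ss!t \<and> (\<forall>t'<t. x \<in> Ss!t' \<longleftrightarrow> y \<in> Ss!t')))"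
  unfolding Q_def
proof (induction Ss rule: rev_induct)
  case Nil
  then show ?case by (simp add: prec_Cons)
next
  case (snoc S Ss)
  define Q0 where "Q0 = fold (\<lambda>S Q. refine Q S) Ss [V]"
  have eq: "fold (\<lambda>S Q. refine Q S) (Ss @ [S]) [V] = refine Q0 S" unfolding Q0_def by simp
  note IH1 = conjunct1[OF snoc.IH[folded Q0_def]]
  note IH2 = conjunct2[OF snoc.IH[folded Q0_def]]
  have nth1: "\<And>t. t < length Ss \<Longrightarrow> (Ss @ [S])!t = Ss!t" by (simp add: nth_append)
  have nth2: "(Ss @ [S])!(length Ss) = S" by simp
  have A: "\<forall>X\<in>set (refine Q0 S). \<forall>x\<in>X. \<forall>y\<in>X. \<forall>t<length (Ss@[S]). (x \<in> (Ss@[S])!t \<longleftrightarrow> y \<in> (Ss@[S])!t)"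
  proof (intro ballI allI impI)
    fix X' x y t assume X': "X' \<in> set (refine Q0 S)" and xy: "x \<in> X'" "y \<in> X'" and t: "t < length (Ss@[S])"
    obtain X where X: "X \<in> set Q0" "X' \<subseteq> X" "X' \<subseteq> S \<or> X' \<inter> S = {}" using refine_mem[OF X'] by blast
    show "x \<in> (Ss@[S])!t \<longleftrightarrow> y \<in> (Ss@[S])!t"
    proof (cases "t < length Ss")
      case True
      have "x \<in> X" "y \<in> X" using X(2) xy by auto
      then have "x \<in> Ss!t \<longleftrightarrow> y \<in> Ss!t" using IH1[rule_format, OF X(1) _ _ True] by blast
      then show ?thesis using nth1[OF True] by simp
    next
      case False
      then have "t = length Ss" using t by simp
      have "x \<in> S \<longleftrightarrow> y \<in> S" using X(3) xy by blast
      then show ?thesis using nth2 \<open>t = length Ss\<close> by simp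
    qed
  qed
  have B: "\<forall>X' Y' x y. prec (refine Q0 S) X' Y' \<longrightarrow> x \<in> X' \<longrightarrow> y \<in> Y' \<longrightarrow>
            (\<exists>t<length (Ss@[S]). x \<in> (Ss@[S])!t \<and> y \<notin> (Ss@[S])!t \<and> (\<forall>t'<t. x \<in> (Ss@[S])!t' \<longleftrightarrow> y \<in> (Ss@[S])!t'))"
  proof (intro allI impI)
    fix X' Y' x y assume p: "prec (refine Q0 S) X' Y'" and x: "x \<in> X'" and y: "y \<in> Y'"
    obtain X Y where XY: "X' \<subseteq> X" "Y' \<subseteq> Y" "prec Q0 X Y \<or> (X = Y \<and> X \<in> set Q0 \<and> X' \<subseteq> S \<and> Y' \<inter> S = {})"
      using refine_prec[OF p] by blast
    from XY(3) show "\<exists>t<length (Ss@[S]). x \<in> (Ss@[S])!t \<and> y \<notin> (Ss@[S])!t \<and> (\<forall>t'<t. x \<in> (Ss@[S])!t' \<longleftrightarrow> y \<in> (Ss@[S])!t')"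
    proof
      assume "prec Q0 X Y"
      moreover have "x \<in> X" "y \<in> Y" using x y XY by auto
      ultimately obtain t where t: "t<length Ss" "x \<in> Ss!t" "y \<notin> Ss!t" "\<forall>t'<t. x \<in> Ss!t' \<longleftrightarrow> y \<in> Ss!t'"
        using IH2[rule_format] by blast
      have "\<forall>t'<t. x \<in> (Ss@[S])!t' \<longleftrightarrow> y \<in> (Ss@[S])!t'"
      proof (intro allI impI)
        fix t' assume "t' < t"
        then have "t' < length Ss" using t by simp
        then show "x \<in> (Ss@[S])!t' \<longleftrightarrow> y \<in> (Ss@[S])!t'" using t(4) \<open>t' < t\<close> nth1 by simp
      qed
      moreover have "t < length (Ss@[S])" "x \<in> (Ss@[S])!t" "y \<notin> (Ss@[S])!t" using t nth1[OF t(1)] by auto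
      ultimately show ?thesis by blast
    next
      assume a: "X = Y \<and> X \<in> set Q0 \<and> X' \<subseteq> S \<and> Y' \<inter> S = {}"
      have xX: "x \<in> X" "y \<in> X" using a x y XY by auto
      have "\<forall>t'<length Ss. x \<in> Ss!t' \<longleftrightarrow> y \<in> Ss!t'" using IH1[rule_format, OF _ xX] a by blast
      then have "\<forall>t'<length Ss. x \<in> (Ss@[S])!t' \<longleftrightarrow> y \<in> (Ss@[S])!t'" using nth1 by simp
      moreover have "x \<in> (Ss@[S])!(length Ss)" "y \<notin> (Ss@[S])!(length Ss)" using a x y nth2 by auto
      moreover have "length Ss < length (Ss@[S])" by simp
      ultimately show ?thesis by blast
    qed
  qed
  show ?case unfolding eq by (rule conjI[OF A B])
qed

lemma prec_concat_filter:
  "prec (concat (map (\<lambda>X. filter (\<lambda>x. x \<in> X) \<rho>) Q)) a b \<Longrightarrow>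
   (\<exists>X\<in>set Q. a \<in> X \<and> b \<in> X \<and> prec \<rho> a b) \<or> (\<exists>X Y. prec Q X Y \<and> a \<in> X \<and> b \<in> Y)"
proof (induction Q)
  case Nil then show ?case by simp
next
  case (Cons X Q)
  have "prec (filter (\<lambda>x. x \<in> X) \<rho>) a b \<or> prec (concat (map (\<lambda>X. filter (\<lambda>x. x \<in> X) \<rho>) Q)) a b \<or>
        (a \<in> set (filter (\<lambda>x. x \<in> X) \<rho>) \<and> b \<in> set (concat (map (\<lambda>X. filter (\<lambda>x. x \<in> X) \<rho>) Q)))"
    using Cons.prems by (simp add: prec_append)
  then show ?case
  proof (elim disjE)
    assume "prec (filter (\<lambda>x. x \<in> X) \<rho>) a b"
    then show ?thesis by (auto simp: prec_filter)
  next
    assume "prec (concat (map (\<lambda>X. filter (\<lambda>x. x \<in> X) \<rho>) Q)) a b"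
    then show ?thesis using Cons.IH by (auto simp: prec_Cons)
  next
    assume a: "a \<in> set (filter (\<lambda>x. x \<in> X) \<rho>) \<and> b \<in> set (concat (map (\<lambda>X. filter (\<lambda>x. x \<in> X) \<rho>) Q))"
    then obtain Y where "Y \<in> set Q" "b \<in> Y" by auto
    moreover have "a \<in> X" using a by simp
    ultimately have "prec (X#Q) X Y \<and> a \<in> X \<and> b \<in> Y" by (simp add: prec_Cons)
    then show ?thesis by blast
  qed
qed

lemma prec_tau:
  assumes "a \<noteq> s" "b \<noteq> s" "prec (rev (s # removeAll s L)) a b"
  shows "prec L b a"
proof -
  have "prec (s # removeAll s L) b a" using prec_rev[of "s # removeAll s L" a b] assms(3) by blast
  then have "prec (removeAll s L) b a" using assms(1,2) by (simp add: prec_Cons)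
  then show ?thesis by (simp add: removeAll_filter_not_eq prec_filter)
qed

section \<open>BFS\<close>

context L11
begin

lemma T_V: "T x y \<Longrightarrow> x \<in> V \<and> y \<in> V" using T_iff P_V by blast

lemma bfs_inv: "bfs_run T s vis q \<Longrightarrow>
  distinct vis \<and> (\<exists>pre. vis = pre @ q \<and> (\<forall>v\<in>set pre. \<forall>w. T v w \<longrightarrow> w \<in> set vis)) \<and>
  (\<forall>v\<in>set vis. \<forall>u. P u v \<longrightarrow> prec vis u v) \<and> set vis \<subseteq> V \<and> s \<in> set vis"
proof (induction rule: bfs_run.induct)
  case start
  then show ?case using sV P_not_s by auto
next
  case (step vis u q ns)
  obtain pre where pre: "vis = pre @ u # q" "\<forall>v\<in>set pre. \<forall>w. T v w \<longrightarrow> w \<in> set vis"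
    using step.IH by blast
  have uvis: "u \<in> set vis" using pre by simp
  have d: "distinct (vis @ ns)" using step.IH step.hyps by auto
  have closed: "\<forall>v\<in>set (pre @ [u]). \<forall>w. T v w \<longrightarrow> w \<in> set (vis @ ns)"
    using pre step.hyps by auto
  have pr: "\<forall>v\<in>set (vis @ ns). \<forall>u'. P u' v \<longrightarrow> prec (vis @ ns) u' v"
  proof (intro ballI allI impI)
    fix v u' assume v: "v \<in> set (vis @ ns)" and pv: "P u' v"
    show "prec (vis @ ns) u' v"
    proof (cases "v \<in> set vis")
      case True
      then show ?thesis using step.IH pv by (simp add: prec_append)
    next
      case False
      then have vns: "v \<in> set ns" using v by simp
      then have Tuv: "T u v" using step.hyps by auto
      have "\<not> P v u"
      proof
        assume "P v u"
        then have "prec vis v u" using step.IH uvis by blast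
        then show False using False prec_set by metis
      qed
      then have "P u v" using Tuv T_iff by blast
      then have "u' = u" using P_unique pv by blast
      then show ?thesis using uvis vns by (simp add: prec_append)
    qed
  qed
  have sub: "set (vis @ ns) \<subseteq> V" using step.IH step.hyps T_V by auto
  show ?case using d closed pr sub step.IH pre by auto
qed

lemma T_closed:
  assumes "s \<in> X" "\<forall>v\<in>X. \<forall>w. T v w \<longrightarrow> w \<in> X" "v \<in> V"
  shows "v \<in> X"
proof -
  have "T\<^sup>*\<^sup>* s v" using st sV assms(3) unfolding spanning_tree_def connected_graph_def by blast
  then show ?thesis
  proof (induction rule: rtranclp_induct)
    case base then show ?case using assms by simp
  next
    case (step y z) then show ?case using assms by blast
  qed
qed

lemma bfs_facts:
  assumes "bfs_order T s bfs"
  shows "distinct bfs" "set bfs = V" "\<And>u v. P u v \<Longrightarrow> prec bfs u v"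
proof -
  have I: "distinct bfs \<and> (\<exists>pre. bfs = pre @ [] \<and> (\<forall>v\<in>set pre. \<forall>w. T v w \<longrightarrow> w \<in> set bfs)) \<and>
    (\<forall>v\<in>set bfs. \<forall>u. P u v \<longrightarrow> prec bfs u v) \<and> set bfs \<subseteq> V \<and> s \<in> set bfs"
    using bfs_inv assms unfolding bfs_order_def by blast
  show "distinct bfs" using I by blast
  have cl: "\<forall>v\<in>set bfs. \<forall>w. T v w \<longrightarrow> w \<in> set bfs" using I by auto
  show "set bfs = V" using I T_closed[OF _ cl] by blast
  fix u v assume "P u v"
  moreover have "v \<in> set bfs" using \<open>set bfs = V\<close> P_V calculation by blast
  ultimately show "prec bfs u v" using I by blast
qed

lemma bfs_member:
  assumes "bfs_order T s bfs" "E a x"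
  shows "prec bfs a x \<longleftrightarrow> P\<^sup>+\<^sup>+ a x"
proof
  have d: "distinct bfs" using bfs_facts[OF assms(1)] by blast
  have Pr: "\<And>a b. P\<^sup>+\<^sup>+ a b \<Longrightarrow> prec bfs a b" using tranclp_prec[OF d, of P] bfs_facts(3)[OF assms(1)] by blast
  {
    assume "prec bfs a x"
    moreover have "P\<^sup>+\<^sup>+ a x \<or> P\<^sup>+\<^sup>+ x a" using A5 assms(2) by blast
    ultimately show "P\<^sup>+\<^sup>+ a x" using Pr prec_asym[OF d] by blast
  }
  {
    assume "P\<^sup>+\<^sup>+ a x" then show "prec bfs a x" using Pr by blast
  }
qed

lemma RD:
  assumes bfs: "bfs_order T s bfs" and px: "P p x" and py: "P p y"
  defines "Q \<equiv> fold (\<lambda>v Q. refine Q {w. E v w \<and> prec (rev bfs) w v}) (rev bfs) [V]"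
  shows "\<And>X. X \<in> set Q \<Longrightarrow> x \<in> X \<Longrightarrow> y \<in> X \<Longrightarrow> \<forall>a\<in>anc x. (E a x \<longleftrightarrow> E a y)"
    and "\<And>X Y. prec Q X Y \<Longrightarrow> x \<in> X \<Longrightarrow> y \<in> Y \<Longrightarrow> D (P\<^sup>+\<^sup>+) (anc x) (\<lambda>a. E a y) (\<lambda>a. E a x)"
proof -
  define f where "f = (\<lambda>v. {w. E v w \<and> prec (rev bfs) w v})"
  define Ss where "Ss = map f (rev bfs)"
  have QSs: "Q = fold (\<lambda>S Q. refine Q S) Ss [V]"
    unfolding Q_def Ss_def f_def by (simp add: fold_map comp_def)
  note FR1 = conjunct1[OF fold_refine[of Ss V, folded QSs]]
  note FR2 = conjunct2[OF fold_refine[of Ss V, folded QSs]]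
  have dB: "distinct (rev bfs)" using bfs_facts[OF bfs] by simp
  have setB: "set (rev bfs) = V" using bfs_facts[OF bfs] by simp
  have lenSs: "length Ss = length (rev bfs)" unfolding Ss_def by simp
  have ancxy: "anc x = anc y" using anc_sib[OF px py] .
  have memx: "\<And>t. t < length Ss \<Longrightarrow> x \<in> Ss!t \<longleftrightarrow> (rev bfs!t \<in> anc x \<and> E (rev bfs!t) x)"
  proof -
    fix t assume "t < length Ss"
    then have "Ss!t = f (rev bfs!t)" unfolding Ss_def by simp
    then have "x \<in> Ss!t \<longleftrightarrow> E (rev bfs!t) x \<and> prec bfs (rev bfs!t) x"
      unfolding f_def by (simp add: prec_rev)
    then show "x \<in> Ss!t \<longleftrightarrow> (rev bfs!t \<in> anc x \<and> E (rev bfs!t) x)"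
      using bfs_member[OF bfs] by blast
  qed
  have memy: "\<And>t. t < length Ss \<Longrightarrow> y \<in> Ss!t \<longleftrightarrow> (rev bfs!t \<in> anc x \<and> E (rev bfs!t) y)"
  proof -
    fix t assume "t < length Ss"
    then have "Ss!t = f (rev bfs!t)" unfolding Ss_def by simp
    then have "y \<in> Ss!t \<longleftrightarrow> E (rev bfs!t) y \<and> prec bfs (rev bfs!t) y"
      unfolding f_def by (simp add: prec_rev)
    then show "y \<in> Ss!t \<longleftrightarrow> (rev bfs!t \<in> anc x \<and> E (rev bfs!t) y)"
      using bfs_member[OF bfs] ancxy by blast
  qed
  {
    fix X assume X: "X \<in> set Q" "x \<in> X" "y \<in> X"
    show "\<forall>a\<in>anc x. (E a x \<longleftrightarrow> E a y)"
    proof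
      fix a assume a: "a \<in> anc x"
      then have "a \<in> V" using anc_V by blast
      then have "a \<in> set (rev bfs)" using setB by simp
      then obtain t where t: "t < length (rev bfs)" "rev bfs!t = a" by (metis in_set_conv_nth)
      have tS: "t < length Ss" using t lenSs by simp
      have "x \<in> Ss!t \<longleftrightarrow> y \<in> Ss!t" using FR1[rule_format, OF X tS] .
      then show "E a x \<longleftrightarrow> E a y" using memx[OF tS] memy[OF tS] t a by simp
    qed
  }
  {
    fix X Y assume XY: "prec Q X Y" "x \<in> X" "y \<in> Y"
    obtain t where t: "t < length Ss" "x \<in> Ss!t" "y \<notin> Ss!t" "\<forall>t'<t. x \<in> Ss!t' \<longleftrightarrow> y \<in> Ss!t'"
      using FR2[rule_format, OF XY] by blast
    define a where "a = rev bfs!t"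
    have a: "a \<in> anc x" "E a x" "\<not> E a y" using memx[OF t(1)] memy[OF t(1)] t(2,3) unfolding a_def by auto
    have "\<forall>a'\<in>anc x. P\<^sup>+\<^sup>+ a a' \<longrightarrow> (E a' y \<longleftrightarrow> E a' x)"
    proof (intro ballI impI)
      fix a' assume a': "a' \<in> anc x" "P\<^sup>+\<^sup>+ a a'"
      have "prec bfs a a'" using tranclp_prec[OF _ bfs_facts(3)[OF bfs]] bfs_facts(1)[OF bfs] a'(2) by blast
      then have pr: "prec (rev bfs) a' a" by (simp add: prec_rev)
      then have "a' \<in> set (rev bfs)" using prec_set by metis
      then obtain t' where t': "t' < length (rev bfs)" "rev bfs!t' = a'" by (metis in_set_conv_nth)
      have tB: "t < length (rev bfs)" using t lenSs by simp
      have "prec (rev bfs) (rev bfs!t') (rev bfs!t)" using pr t' unfolding a_def by simp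
      then have "t' < t" using prec_nth_iff[OF dB t'(1) tB] by blast
      then have "x \<in> Ss!t' \<longleftrightarrow> y \<in> Ss!t'" using t(4) by blast
      moreover have t'S: "t' < length Ss" using t' lenSs by simp
      ultimately show "E a' y \<longleftrightarrow> E a' x" using memx[OF t'S] memy[OF t'S] t' a'(1) by simp
    qed
    then show "D (P\<^sup>+\<^sup>+) (anc x) (\<lambda>a. E a y) (\<lambda>a. E a x)" unfolding D_def using a by blast
  }
qed

end

lemma refine_Union: "\<Union>(set (refine Q S)) = \<Union>(set Q)"
  by (induction Q) (auto simp: refine_Cons)

lemma fold_refine_Union: "\<Union>(set (fold (\<lambda>S Q. refine Q S) Ss Q0)) = \<Union>(set Q0)"
  by (induction Ss arbitrary: Q0) (auto simp: refine_Union)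

definition stepok :: "('a \<Rightarrow> 'a \<Rightarrow> bool) \<Rightarrow> 'a list \<Rightarrow> 'a list \<Rightarrow> 'a \<Rightarrow> bool" where
  "stepok H \<tau> vis w \<longleftrightarrow> (\<exists>i<length vis. has_unvisited H vis (vis ! i) \<and>
     (\<forall>k. i < k \<and> k < length vis \<longrightarrow> \<not> has_unvisited H vis (vis ! k)) \<and>
     H (vis ! i) w \<and> w \<notin> set vis \<and>
     (\<forall>w'. H (vis ! i) w' \<and> w' \<notin> set vis \<longrightarrow> w' = w \<or> prec \<tau> w' w))"

lemma stepokI: "i<length vis \<Longrightarrow> has_unvisited H vis (vis ! i) \<Longrightarrow>
     (\<forall>k. i < k \<and> k < length vis \<longrightarrow> \<not> has_unvisited H vis (vis ! k)) \<Longrightarrow>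
     H (vis ! i) w \<Longrightarrow> w \<notin> set vis \<Longrightarrow>
     (\<forall>w'. H (vis ! i) w' \<and> w' \<notin> set vis \<longrightarrow> w' = w \<or> prec \<tau> w' w) \<Longrightarrow> stepok H \<tau> vis w"
  unfolding stepok_def by (intro exI[of _ i]) simp

lemma run_step: assumes r: "dfs_plus_run H \<tau> vis" and so: "stepok H \<tau> vis w" shows "dfs_plus_run H \<tau> (vis @ [w])"
proof -
  obtain i where i: "i<length vis" "has_unvisited H vis (vis ! i)"
     "\<forall>k. i < k \<and> k < length vis \<longrightarrow> \<not> has_unvisited H vis (vis ! k)"
     "H (vis ! i) w" "w \<notin> set vis"
     "\<forall>w'. H (vis ! i) w' \<and> w' \<notin> set vis \<longrightarrow> w' = w \<or> prec \<tau> w' w"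
    using so unfolding stepok_def by blast
  show ?thesis by (rule dfs_plus_run.step[OF r i])
qed

lemma run_conds: "dfs_plus_run H \<tau> vis \<Longrightarrow> \<forall>k. 0 < k \<and> k < length vis \<longrightarrow> stepok H \<tau> (take k vis) (vis ! k)"
proof (induction rule: dfs_plus_run.induct)
  case (start)
  then show ?case by simp
next
  case (step vis i w)
  show ?case
  proof (intro allI impI)
    fix k assume k: "0 < k \<and> k < length (vis @ [w])"
    show "stepok H \<tau> (take k (vis @ [w])) ((vis @ [w]) ! k)"
    proof (cases "k < length vis")
      case True
      then show ?thesis using step.IH k by (simp add: nth_append)
    next
      case False
      then have kv: "k = length vis" using k by simp
      then have e: "take k (vis @ [w]) = vis" "(vis @ [w]) ! k = w" by auto
      have "stepok H \<tau> vis w" by (rule stepokI[OF step.hyps(2-7)])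
      then show ?thesis using e by simp
    qed
  qed
qed

locale L11b = L11 +
  fixes bfs :: "'a list"
  assumes bfs: "bfs_order (ltree E \<sigma>) s bfs"
begin

abbreviation "Qr \<equiv> fold (\<lambda>v Q. refine Q {w. E v w \<and> prec (rev bfs) w v}) (rev bfs) [V]"
abbreviation "Lr \<equiv> concat (map (\<lambda>X. filter (\<lambda>x. x \<in> X) (rev (rev \<sigma>))) Qr)"
abbreviation "\<tau> \<equiv> ordering_tau V E s (rev \<sigma>) (rev bfs)"

lemma tau_eq: "\<tau> = rev (s # removeAll s Lr)"
  unfolding ordering_tau_def Let_def by simp

lemma Qr_Union: "\<Union>(set Qr) = V"
proof -
  have eq: "Qr = fold (\<lambda>S Q. refine Q S) (map (\<lambda>v. {w. E v w \<and> prec (rev bfs) w v}) (rev bfs)) [V]"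
    by (simp add: fold_map comp_def)
  have "\<Union>(set Qr) = \<Union>(set [V])" unfolding eq by (rule fold_refine_Union)
  then show ?thesis by simp
qed

lemma tau_set: "set \<tau> = V"
proof -
  have "set Lr = V" using Qr_Union set\<sigma> by auto
  then show ?thesis unfolding tau_eq using sV by auto
qed

lemma tau_last: "last \<tau> = s"
  unfolding tau_eq by simp

lemma P_not_s': "P p x \<Longrightarrow> x \<noteq> s" using P_not_s by blast

lemma sib_order:
  assumes px: "P p x" and pc: "P p c" and pr: "prec \<tau> c x"
  shows "(prec \<sigma> x c \<and> (\<forall>a\<in>anc x. E a x \<longleftrightarrow> E a c)) \<or> D (P\<^sup>+\<^sup>+) (anc x) (\<lambda>a. E a c) (\<lambda>a. E a x)"
proof -
  have "prec Lr x c" using prec_tau[OF P_not_s'[OF pc] P_not_s'[OF px]] pr unfolding tau_eq by blast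
  then have "(\<exists>X\<in>set Qr. x \<in> X \<and> c \<in> X \<and> prec (rev (rev \<sigma>)) x c) \<or> (\<exists>X Y. prec Qr X Y \<and> x \<in> X \<and> c \<in> Y)"
    by (rule prec_concat_filter)
  then show ?thesis
  proof
    assume "\<exists>X\<in>set Qr. x \<in> X \<and> c \<in> X \<and> prec (rev (rev \<sigma>)) x c"
    then obtain X where X: "X \<in> set Qr" "x \<in> X" "c \<in> X" "prec \<sigma> x c" by auto
    then show ?thesis using RD(1)[OF bfs px pc X(1-3)] by blast
  next
    assume "\<exists>X Y. prec Qr X Y \<and> x \<in> X \<and> c \<in> Y"
    then obtain X Y where "prec Qr X Y" "x \<in> X" "c \<in> Y" by blast
    then show ?thesis using RD(2)[OF bfs px pc] by blast
  qed
qed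

lemma sib_noD:
  assumes px: "P p x" and pc: "P p c" and pr: "prec \<tau> c x" and nprec: "\<not> prec \<sigma> x c"
  shows "D (P\<^sup>+\<^sup>+) (anc x) (\<lambda>a. E a c) (\<lambda>a. E a x)"
  using sib_order[OF px pc pr] nprec by blast

lemma sib_noD2:
  assumes px: "P p x" and pc: "P p c" and pr: "prec \<tau> c x"
  shows "\<not> D (P\<^sup>+\<^sup>+) (anc x) (\<lambda>a. E a x) (\<lambda>a. E a c)"
proof -
  from sib_order[OF px pc pr] show ?thesis
  proof
    assume "prec \<sigma> x c \<and> (\<forall>a\<in>anc x. E a x \<longleftrightarrow> E a c)"
    then show ?thesis unfolding D_def by blast
  next
    assume "D (P\<^sup>+\<^sup>+) (anc x) (\<lambda>a. E a c) (\<lambda>a. E a x)"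
    then show ?thesis using D_antisym by blast
  qed
qed

lemma P_prec_idx: "P (\<sigma>!j) (\<sigma>!k) \<Longrightarrow> j < n \<Longrightarrow> k < n \<Longrightarrow> j < k"
  using P_nth[of j k] by simp

lemma idx: "v \<in> V \<Longrightarrow> \<exists>k<n. \<sigma>!k = v"
  using set\<sigma> by (auto simp: in_set_conv_nth)

lemma take_nth: "m < k \<Longrightarrow> take k \<sigma> ! m = \<sigma> ! m" by simp

lemma unvis_iff: "l < n \<Longrightarrow> \<sigma>!l \<notin> set (take k \<sigma>) \<longleftrightarrow> k \<le> l"
  using nth_in_take_iff[OF d\<sigma>] by (simp add: not_less)

lemma len_take: "k \<le> n \<Longrightarrow> length (take k \<sigma>) = k" by simp

lemma desc_noD:
  assumes cw: "P\<^sup>+\<^sup>+ c w"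
  shows "\<not> D (P\<^sup>+\<^sup>+) (anc c) (\<lambda>a. E a c) (\<lambda>a. E a w)"
proof -
  have cV: "c \<in> V" "w \<in> V" using anc_V cw by auto
  obtain k where k: "k < length \<sigma>'" "\<sigma>'!k = c" using idx\<sigma>' cV by blast
  obtain l where l: "l < length \<sigma>'" "\<sigma>'!l = w" using idx\<sigma>' cV by blast
  show ?thesis
  proof (cases "k = 0")
    case True
    then have "c = s" using k \<sigma>'0 by simp
    then have "anc c = {}" using P_not_s by (auto elim: tranclp.cases)
    then show ?thesis unfolding D_def by blast
  next
    case False
    have "prec \<sigma>' c w" using anc_prec' cw by blast
    then have kl: "k < l" using prec_nth_iff[OF d\<sigma>' k(1) l(1)] k l by blast
    have H: "\<forall>t<k. E (\<sigma>'!t) (\<sigma>'!l) \<longrightarrow> P\<^sup>+\<^sup>+ (\<sigma>'!t) (\<sigma>'!k)"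
      using H_desc[OF d\<sigma>' P_prec' k(1) l(1)] cw k l by blast
    have "\<not> label_less (lexdfs_label E s \<sigma>' k (\<sigma>'!k)) (lexdfs_label E s \<sigma>' k (\<sigma>'!l))"
      using lex_at[OF lex' kl l(1)] .
    then show ?thesis using GT[OF d\<sigma>' set\<sigma>' \<sigma>'0 P_prec' _ kl l(1) H] False k l by simp
  qed
qed

end

context L11b
begin

lemma pos_notS: "0 < k \<Longrightarrow> k < n \<Longrightarrow> \<sigma>!k \<noteq> s" by (rule nz_not_s)

lemma step_of_lex:
  assumes lex: "is_lexdfs_order V E s \<sigma>" and k: "0 < k" "k < n"
  shows "stepok T \<tau> (take k \<sigma>) (\<sigma>!k)"
proof -
  define x where "x = \<sigma>!k"
  define vis where "vis = take k \<sigma>"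
  have lv: "length vis = k" unfolding vis_def using k by simp
  have vnth: "\<And>m. m < k \<Longrightarrow> vis!m = \<sigma>!m" unfolding vis_def by simp
  obtain p where px: "P p x" using P_exists[OF k(2,1)] unfolding x_def by blast
  have "p \<in> V" using P_V px by blast
  then obtain j where j: "j < n" "\<sigma>!j = p" using idx by blast
  have jk: "j < k" using P_prec_idx[of j k] px j k unfolding x_def by simp
  have xs: "x \<noteq> s" using pos_notS k unfolding x_def by blast
  have xunv: "x \<notin> set vis" using unvis_iff[OF k(2), of k] unfolding x_def vis_def by simp
  have Tpx: "T p x" using px T_iff by blast
  have rightmost: "\<forall>m. j < m \<and> m < k \<longrightarrow> \<not> E (\<sigma>!k) (\<sigma>!m)" using P_nth[OF j(1) k(2)] px j unfolding x_def by simp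
  have unv_idx: "\<And>y. y \<notin> set vis \<Longrightarrow> y \<in> V \<Longrightarrow> \<exists>l<n. \<sigma>!l = y \<and> k \<le> l"
  proof -
    fix y assume "y \<notin> set vis" "y \<in> V"
    then obtain l where "l < n" "\<sigma>!l = y" using idx by blast
    then show "\<exists>l<n. \<sigma>!l = y \<and> k \<le> l" using unvis_iff[of l k] \<open>y \<notin> set vis\<close> unfolding vis_def by auto
  qed
  have h: "has_unvisited T vis (vis!j)" unfolding has_unvisited_def using vnth[OF jk] j Tpx xunv by auto
  have nu: "\<forall>k'. j < k' \<and> k' < length vis \<longrightarrow> \<not> has_unvisited T vis (vis!k')"
  proof (intro allI impI notI)
    fix k' assume k': "j < k' \<and> k' < length vis" and hu: "has_unvisited T vis (vis!k')"
    have k'k: "k' < k" using k' lv by simp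
    obtain y where y: "T (\<sigma>!k') y" "y \<notin> set vis" using hu vnth[OF k'k] unfolding has_unvisited_def by auto
    have "y \<in> V" using T_V y by blast
    then obtain l where l: "l < n" "\<sigma>!l = y" "k \<le> l" using unv_idx y by blast
    have k'n: "k' < n" using k'k k by simp
    have "\<not> P y (\<sigma>!k')" using P_prec_idx[of l k'] l k'n k'k by auto
    then have Pky: "P (\<sigma>!k') (\<sigma>!l)" using y T_iff l by blast
    then have Pn: "k' < l \<and> E (\<sigma>!l) (\<sigma>!k') \<and> (\<forall>m. k' < m \<and> m < l \<longrightarrow> \<not> E (\<sigma>!l) (\<sigma>!m))"
      using P_nth[OF k'n l(1)] by simp
    have "l \<noteq> k"
    proof
      assume "l = k"
      then have "P (\<sigma>!k') x" using Pky unfolding x_def by simp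
      then have "\<sigma>!k' = p" using P_unique px by blast
      then have "k' = j" using nth_eq_iff_index_eq[OF d\<sigma> k'n j(1)] j by simp
      then show False using k' by simp
    qed
    then have kl: "k < l" using l by simp
    have ls: "\<sigma>!l \<noteq> s" using pos_notS[of l] l kl k by simp
    have "label_less (lexdfs_label E s \<sigma> k (\<sigma>!k)) (lexdfs_label E s \<sigma> k (\<sigma>!l))"
      unfolding lab_less_iff[OF xs[unfolded x_def] ls]
    proof (intro exI[of _ k'] conjI allI impI)
      show "k' < k" by (rule k'k)
      show "E (\<sigma>!k') (\<sigma>!l)" using Pn Esym by blast
      show "\<not> E (\<sigma>!k') (\<sigma>!k)" using rightmost k' k'k Esym by blast
      fix t' assume t': "k' < t' \<and> t' < k"
      have "\<not> E (\<sigma>!t') (\<sigma>!k)" using rightmost k' t' Esym by (meson less_trans)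
      moreover have "\<not> E (\<sigma>!t') (\<sigma>!l)" using Pn t' kl Esym by (meson less_trans)
      ultimately show "E (\<sigma>!t') (\<sigma>!k) \<longleftrightarrow> E (\<sigma>!t') (\<sigma>!l)" by blast
    qed
    then show False using lex_at[OF lex kl l(1)] by simp
  qed
  have W: "\<forall>w'. T (vis!j) w' \<and> w' \<notin> set vis \<longrightarrow> w' = x \<or> prec \<tau> w' x"
  proof (intro allI impI)
    fix w' assume w': "T (vis!j) w' \<and> w' \<notin> set vis"
    then have Tpw: "T p w'" using vnth[OF jk] j by simp
    have "w' \<in> V" using T_V Tpw by blast
    then obtain l where l: "l < n" "\<sigma>!l = w'" "k \<le> l" using unv_idx w' by blast
    have "\<not> P w' p" using P_prec_idx[of l j] l j jk by auto
    then have pw: "P p w'" using Tpw T_iff by blast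
    show "w' = x \<or> prec \<tau> w' x"
    proof (cases "w' = x")
      case True then show ?thesis by simp
    next
      case False
      then have kl: "k < l" using l unfolding x_def by (metis le_neq_implies_less)
      have "w' \<in> set \<tau>" "x \<in> set \<tau>" using tau_set \<open>w' \<in> V\<close> P_V px by auto
      then have "prec \<tau> w' x \<or> prec \<tau> x w'" using prec_total False by metis
      moreover have "\<not> prec \<tau> x w'"
      proof
        assume pr: "prec \<tau> x w'"
        have "\<not> prec \<sigma> w' x" using prec_nth_iff[OF d\<sigma> l(1) k(2)] l kl unfolding x_def by simp
        then have DD: "D (P\<^sup>+\<^sup>+) (anc w') (\<lambda>a. E a x) (\<lambda>a. E a w')" using sib_noD[OF pw px pr] by blast
        have anceq: "anc w' = anc x" using anc_sib[OF pw px] .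
        have H: "\<forall>t<k. E (\<sigma>!t) (\<sigma>!l) \<longrightarrow> P\<^sup>+\<^sup>+ (\<sigma>!t) (\<sigma>!k)"
        proof (intro allI impI)
          fix t assume t: "t < k" "E (\<sigma>!t) (\<sigma>!l)"
          have tn: "t < n" using t k by simp
          have "P\<^sup>+\<^sup>+ (\<sigma>!t) (\<sigma>!l) \<or> P\<^sup>+\<^sup>+ (\<sigma>!l) (\<sigma>!t)" using A5 t by blast
          moreover have "\<not> P\<^sup>+\<^sup>+ (\<sigma>!l) (\<sigma>!t)"
          proof
            assume "P\<^sup>+\<^sup>+ (\<sigma>!l) (\<sigma>!t)"
            then have "prec \<sigma> (\<sigma>!l) (\<sigma>!t)" using anc_prec by blast
            then show False using prec_nth_iff[OF d\<sigma> l(1) tn] t kl by simp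
          qed
          ultimately have "(\<sigma>!t) \<in> anc w'" using l by auto
          then show "P\<^sup>+\<^sup>+ (\<sigma>!t) (\<sigma>!k)" using anceq unfolding x_def by blast
        qed
        have "label_less (lexdfs_label E s \<sigma> k (\<sigma>!k)) (lexdfs_label E s \<sigma> k (\<sigma>!l))"
          using GT[OF d\<sigma> set\<sigma> \<sigma>0 P_prec k(1) kl l(1) H] DD anceq l unfolding x_def by simp
        then show False using lex_at[OF lex kl l(1)] by simp
      qed
      ultimately show ?thesis by blast
    qed
  qed
  have jl: "j < length vis" using jk lv by simp
  have "stepok T \<tau> vis x"
    by (rule stepokI[OF jl h nu _ xunv W]) (use Tpx vnth[OF jk] j in simp)
  then show ?thesis unfolding vis_def x_def .
qed

lemma run_of_lex:
  assumes lex: "is_lexdfs_order V E s \<sigma>"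
  shows "dfs_plus_output T \<tau> \<sigma>"
proof -
  have tne: "\<tau> \<noteq> []" using tau_set sV by auto
  have "\<forall>k. 0 < k \<and> k \<le> n \<longrightarrow> dfs_plus_run T \<tau> (take k \<sigma>)"
  proof (intro allI)
    fix k show "0 < k \<and> k \<le> n \<longrightarrow> dfs_plus_run T \<tau> (take k \<sigma>)"
    proof (induction k)
      case 0 then show ?case by simp
    next
      case (Suc k)
      show ?case
      proof
        assume a: "0 < Suc k \<and> Suc k \<le> n"
        show "dfs_plus_run T \<tau> (take (Suc k) \<sigma>)"
        proof (cases "k = 0")
          case True
          have "take 1 \<sigma> = [s]" using \<sigma>0 \<sigma>ne by (cases \<sigma>) auto
          then have "take (Suc k) \<sigma> = [last \<tau>]" using True tau_last by simp
          then show ?thesis using dfs_plus_run.start[OF tne] by simp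
        next
          case False
          then have r: "dfs_plus_run T \<tau> (take k \<sigma>)" using Suc.IH a by simp
          have kn: "k < n" using a by simp
          have "take (Suc k) \<sigma> = take k \<sigma> @ [\<sigma>!k]" using kn by (simp add: take_Suc_conv_app_nth)
          then show ?thesis using run_step[OF r step_of_lex[OF lex _ kn]] False by simp
        qed
      qed
    qed
  qed
  then have "dfs_plus_run T \<tau> (take n \<sigma>)" using n_pos by blast
  then have "dfs_plus_run T \<tau> \<sigma>" by simp
  moreover have "\<forall>u\<in>set \<sigma>. \<not> has_unvisited T \<sigma> u"
    unfolding has_unvisited_def using T_V set\<sigma> by blast
  ultimately show ?thesis unfolding dfs_plus_output_def by blast
qed

end

lemma exE3: "\<exists>t<k. A t \<and> B t \<and> C t \<Longrightarrow> (\<And>t. t<k \<Longrightarrow> A t \<Longrightarrow> B t \<Longrightarrow> C t \<Longrightarrow> thesis) \<Longrightarrow> thesis"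
  by blast

lemma stepokE:
  assumes "stepok H \<tau> vis w"
  obtains i where "i<length vis" "has_unvisited H vis (vis ! i)"
     "\<forall>k. i < k \<and> k < length vis \<longrightarrow> \<not> has_unvisited H vis (vis ! k)"
     "H (vis ! i) w" "w \<notin> set vis"
     "\<forall>w'. H (vis ! i) w' \<and> w' \<notin> set vis \<longrightarrow> w' = w \<or> prec \<tau> w' w"
  using assms unfolding stepok_def
  apply (elim exE conjE)
  apply (rule that)
  apply assumption+
  done

context L11b
begin

lemma lex_of_step:
  assumes so: "stepok T \<tau> (take k \<sigma>) (\<sigma>!k)" and k: "0 < k" "k < l" "l < n"
  shows "\<not> label_less (lexdfs_label E s \<sigma> k (\<sigma>!k)) (lexdfs_label E s \<sigma> k (\<sigma>!l))"
proof
  assume LL: "label_less (lexdfs_label E s \<sigma> k (\<sigma>!k)) (lexdfs_label E s \<sigma> k (\<sigma>!l))"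
  define x where "x = \<sigma>!k"
  define w where "w = \<sigma>!l"
  define vis where "vis = take k \<sigma>"
  have kn: "k < n" using k by simp
  have lv: "length vis = k" unfolding vis_def using kn by simp
  have vnth: "\<And>m. m < k \<Longrightarrow> vis!m = \<sigma>!m" unfolding vis_def by simp
  have unvis: "\<And>m. m < n \<Longrightarrow> \<sigma>!m \<notin> set vis \<longleftrightarrow> k \<le> m" unfolding vis_def by (rule unvis_iff)
  have so': "stepok T \<tau> vis x" using so unfolding vis_def x_def .
  obtain i0 where i0': "i0 < length vis" "has_unvisited T vis (vis ! i0)"
     "\<forall>k'. i0 < k' \<and> k' < length vis \<longrightarrow> \<not> has_unvisited T vis (vis ! k')"
     "T (vis ! i0) x" "x \<notin> set vis"
     "\<forall>w'. T (vis ! i0) w' \<and> w' \<notin> set vis \<longrightarrow> w' = x \<or> prec \<tau> w' x"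
    using so' by (rule stepokE)
  have i0: "i0 < k" "has_unvisited T vis (vis ! i0)"
     "\<forall>k'. i0 < k' \<and> k' < k \<longrightarrow> \<not> has_unvisited T vis (vis ! k')"
     "T (vis ! i0) x" "x \<notin> set vis"
     "\<forall>w'. T (vis ! i0) w' \<and> w' \<notin> set vis \<longrightarrow> w' = x \<or> prec \<tau> w' x"
    using i0' lv by auto
  define p where "p = \<sigma>!i0"
  have i0n: "i0 < n" using i0 kn by simp
  have Tpx: "T p x" using i0(4) vnth[OF i0(1)] unfolding p_def by simp
  have "\<not> P x p" using P_prec_idx[of k i0] i0 kn i0n unfolding x_def p_def by auto
  then have px: "P p x" using Tpx T_iff by blast
  have W: "\<And>c. T p c \<Longrightarrow> c \<notin> set vis \<Longrightarrow> c = x \<or> prec \<tau> c x"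
    using i0(6) vnth[OF i0(1)] unfolding p_def by simp
  have wunv: "w \<notin> set vis" using unvis[OF k(3)] k unfolding w_def by simp
  have NU: "\<And>u. P\<^sup>+\<^sup>+ u w \<Longrightarrow> \<forall>m. m < n \<longrightarrow> \<sigma>!m = u \<longrightarrow> i0 < m \<longrightarrow> m < k \<longrightarrow> False"
  proof -
    fix u assume "P\<^sup>+\<^sup>+ u w"
    then show "\<forall>m. m < n \<longrightarrow> \<sigma>!m = u \<longrightarrow> i0 < m \<longrightarrow> m < k \<longrightarrow> False"
    proof (induction rule: converse_tranclp_induct)
      case (base y)
      show ?case
      proof (intro allI impI)
        fix m assume m: "m < n" "\<sigma>!m = y" "i0 < m" "m < k"
        have "has_unvisited T vis (vis!m)" unfolding has_unvisited_def
          using vnth[OF m(4)] m(2) base wunv T_iff by auto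
        then show False using i0(3) m by blast
      qed
    next
      case (step y z)
      show ?case
      proof (intro allI impI)
        fix m assume m: "m < n" "\<sigma>!m = y" "i0 < m" "m < k"
        have "z \<in> V" using P_V step.hyps(1) by blast
        then obtain m' where m': "m' < n" "\<sigma>!m' = z" using idx by blast
        have "m < m'" using P_prec_idx[of m m'] step.hyps(1) m m' by simp
        show False
        proof (cases "m' < k")
          case True
          then show False using step.IH m' \<open>m < m'\<close> m by auto
        next
          case False
          then have "z \<notin> set vis" using unvis[OF m'(1)] m' by simp
          then have "has_unvisited T vis (vis!m)" unfolding has_unvisited_def
            using vnth[OF m(4)] m(2) step.hyps(1) T_iff by auto
          then show False using i0(3) m by blast
        qed
      qed
    qed
  qed
  have xs: "x \<noteq> s" "w \<noteq> s" using pos_notS k unfolding x_def w_def by auto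
  have LL': "label_less (lexdfs_label E s \<sigma> k x) (lexdfs_label E s \<sigma> k w)" using LL unfolding x_def w_def .
  have "\<exists>t<k. E (\<sigma>!t) w \<and> \<not> E (\<sigma>!t) x \<and> (\<forall>t'. t < t' \<and> t' < k \<longrightarrow> (E (\<sigma>!t') x \<longleftrightarrow> E (\<sigma>!t') w))"
    using LL' unfolding lab_less_iff[OF xs] .
  then obtain t where t: "t < k" "E (\<sigma>!t) w" "\<not> E (\<sigma>!t) x"
      "\<forall>t'. t < t' \<and> t' < k \<longrightarrow> (E (\<sigma>!t') x \<longleftrightarrow> E (\<sigma>!t') w)"
    by (rule exE3)
  have anc_w: "\<And>t. t < k \<Longrightarrow> E (\<sigma>!t) w \<Longrightarrow> P\<^sup>+\<^sup>+ (\<sigma>!t) w"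
  proof -
    fix t assume t: "t < k" "E (\<sigma>!t) w"
    have tn: "t < n" using t kn by simp
    have "P\<^sup>+\<^sup>+ (\<sigma>!t) w \<or> P\<^sup>+\<^sup>+ w (\<sigma>!t)" using A5 t by blast
    moreover have "\<not> P\<^sup>+\<^sup>+ w (\<sigma>!t)"
    proof
      assume "P\<^sup>+\<^sup>+ w (\<sigma>!t)"
      then have "prec \<sigma> (\<sigma>!l) (\<sigma>!t)" using anc_prec unfolding w_def by blast
      then show False using prec_nth_iff[OF d\<sigma> k(3) tn] t k by simp
    qed
    ultimately show "P\<^sup>+\<^sup>+ (\<sigma>!t) w" by blast
  qed
  have notafter: "\<And>t. t < k \<Longrightarrow> E (\<sigma>!t) w \<Longrightarrow> t \<le> i0"
  proof (rule ccontr)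
    fix t assume t: "t < k" "E (\<sigma>!t) w" "\<not> t \<le> i0"
    have tn: "t < n" using t kn by simp
    show False using NU[OF anc_w[OF t(1,2)], rule_format, of t] t tn by simp
  qed
  have "t \<noteq> i0" using t(3) P_E[OF px] unfolding p_def by blast
  then have ti0: "t < i0" using notafter[OF t(1,2)] by simp
  have Epw: "E p w" using t(4) ti0 i0(1) P_E[OF px] unfolding p_def by blast
  have pw: "P\<^sup>+\<^sup>+ p w" using anc_w[OF i0(1)] Epw unfolding p_def by blast
  obtain c where pc: "P p c" and cw: "P\<^sup>*\<^sup>* c w" using tranclpD[OF pw] by blast
  have "c \<in> V" using P_V pc by blast
  then obtain lc where lc: "lc < n" "\<sigma>!lc = c" using idx by blast
  have i0lc: "i0 < lc" using P_prec_idx[of i0 lc] pc lc i0n unfolding p_def by simp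
  have cw': "c = w \<or> P\<^sup>+\<^sup>+ c w" using cw by (meson rtranclpD)
  have klc: "k \<le> lc"
  proof (rule ccontr)
    assume "\<not> k \<le> lc"
    then have "lc < k" by simp
    from cw' show False
    proof
      assume "c = w"
      then show False using wunv \<open>lc < k\<close> lc unvis[OF lc(1)] by simp
    next
      assume "P\<^sup>+\<^sup>+ c w"
      then show False using NU lc i0lc \<open>lc < k\<close> by blast
    qed
  qed
  have noD: "\<not> D (P\<^sup>+\<^sup>+) (anc x) (\<lambda>a. E a x) (\<lambda>a. E a w)"
  proof (cases "c = x")
    case True
    have "x \<noteq> w" using nth_eq_iff_index_eq[OF d\<sigma> kn k(3)] k unfolding x_def w_def by simp
    then have "P\<^sup>+\<^sup>+ x w" using cw' True by blast
    then show ?thesis using desc_noD by blast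
  next
    case False
    have "c \<notin> set vis" using unvis[OF lc(1)] lc klc by simp
    then have "prec \<tau> c x" using W pc T_iff False by blast
    then have D1: "\<not> D (P\<^sup>+\<^sup>+) (anc x) (\<lambda>a. E a x) (\<lambda>a. E a c)" using sib_noD2[OF px pc] by blast
    from cw' show ?thesis
    proof
      assume "c = w" then show ?thesis using D1 by simp
    next
      assume "P\<^sup>+\<^sup>+ c w"
      then have "\<not> D (P\<^sup>+\<^sup>+) (anc c) (\<lambda>a. E a c) (\<lambda>a. E a w)" using desc_noD by blast
      moreover have "anc c = anc x" using anc_sib[OF pc px] .
      ultimately have "\<not> D (P\<^sup>+\<^sup>+) (anc x) (\<lambda>a. E a c) (\<lambda>a. E a w)" by simp
      then show ?thesis using D_trans D1 by blast
    qed
  qed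
  have H: "\<forall>t<k. E (\<sigma>!t) (\<sigma>!l) \<longrightarrow> P\<^sup>+\<^sup>+ (\<sigma>!t) (\<sigma>!k)"
  proof (intro allI impI)
    fix t' assume t': "t' < k" "E (\<sigma>!t') (\<sigma>!l)"
    have t'w: "E (\<sigma>!t') w" using t'(2) unfolding w_def .
    have tw: "P\<^sup>+\<^sup>+ (\<sigma>!t') w" by (rule anc_w[OF t'(1) t'w])
    have "t' \<le> i0" by (rule notafter[OF t'(1) t'w])
    then have "t' = i0 \<or> t' < i0" by auto
    then show "P\<^sup>+\<^sup>+ (\<sigma>!t') (\<sigma>!k)"
    proof
      assume "t' = i0"
      then have "P (\<sigma>!t') (\<sigma>!k)" using px unfolding p_def x_def by simp
      then show ?thesis by (rule tranclp.r_into_trancl)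
    next
      assume ti: "t' < i0"
      have t'n: "t' < n" using ti i0n by simp
      have tc: "P\<^sup>+\<^sup>+ (\<sigma>!t') c"
      proof -
        from cw' show ?thesis
        proof
          assume "c = w" then show ?thesis using tw by simp
        next
          assume cw2: "P\<^sup>+\<^sup>+ c w"
          have ch: "\<sigma>!t' = c \<or> P\<^sup>+\<^sup>+ (\<sigma>!t') c \<or> P\<^sup>+\<^sup>+ c (\<sigma>!t')" using anc_chain[OF tw cw2] .
          have ne: "\<sigma>!t' \<noteq> c" using nth_eq_iff_index_eq[OF d\<sigma> t'n lc(1)] lc ti i0lc by simp
          have nb: "\<not> P\<^sup>+\<^sup>+ c (\<sigma>!t')"
          proof
            assume "P\<^sup>+\<^sup>+ c (\<sigma>!t')"
            then have "prec \<sigma> c (\<sigma>!t')" by (rule anc_prec)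
            then have "prec \<sigma> (\<sigma>!lc) (\<sigma>!t')" using lc by simp
            then show False using prec_nth_iff[OF d\<sigma> lc(1) t'n] ti i0lc by simp
          qed
          show ?thesis using ch ne nb by blast
        qed
      qed
      have "\<sigma>!t' = p \<or> P\<^sup>+\<^sup>+ (\<sigma>!t') p" using anc_child[OF pc] tc by blast
      then have "P\<^sup>+\<^sup>+ (\<sigma>!t') x" using anc_child[OF px] by blast
      then show ?thesis unfolding x_def .
    qed
  qed
  have "label_less (lexdfs_label E s \<sigma> k (\<sigma>!k)) (lexdfs_label E s \<sigma> k (\<sigma>!l)) \<longleftrightarrow>
        D (P\<^sup>+\<^sup>+) (anc (\<sigma>!k)) (\<lambda>a. E a (\<sigma>!k)) (\<lambda>a. E a (\<sigma>!l))"
    by (rule GT[OF d\<sigma> set\<sigma> \<sigma>0 P_prec k H])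
  then have "D (P\<^sup>+\<^sup>+) (anc x) (\<lambda>a. E a x) (\<lambda>a. E a w)" using LL unfolding x_def w_def by blast
  then show False using noD by blast
qed

lemma lex_of_output:
  assumes out: "dfs_plus_output T \<tau> \<sigma>"
  shows "is_lexdfs_order V E s \<sigma>"
proof -
  have run: "dfs_plus_run T \<tau> \<sigma>" using out unfolding dfs_plus_output_def by blast
  have conds: "\<forall>k. 0 < k \<and> k < n \<longrightarrow> stepok T \<tau> (take k \<sigma>) (\<sigma>!k)" using run_conds[OF run] .
  have "\<forall>i < n. \<forall>w \<in> V - set (take (Suc i) \<sigma>).
        \<not> label_less (lexdfs_label E s \<sigma> i (\<sigma> ! i)) (lexdfs_label E s \<sigma> i w)"
  proof (intro allI impI ballI)
    fix i w assume i: "i < n" and w: "w \<in> V - set (take (Suc i) \<sigma>)"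
    obtain l where l: "l < n" "\<sigma>!l = w" using idx w by blast
    have il: "i < l" using unvis_iff[OF l(1), of "Suc i"] l w by simp
    show "\<not> label_less (lexdfs_label E s \<sigma> i (\<sigma> ! i)) (lexdfs_label E s \<sigma> i w)"
    proof (cases "i = 0")
      case True
      have "w \<noteq> s" using pos_notS[of l] l il True by simp
      then show ?thesis using True \<sigma>0 by (simp add: lexdfs_label_def label_less_def)
    next
      case False
      then have "stepok T \<tau> (take i \<sigma>) (\<sigma>!i)" using conds i by simp
      then show ?thesis using lex_of_step[of i l] False il l by simp
    qed
  qed
  then show ?thesis unfolding is_lexdfs_order_def using vo by blast
qed

end

theorem lemma11:
  fixes V :: "'a set" and E T :: "'a \<Rightarrow> 'a \<Rightarrow> bool" and s :: 'a and \<sigma> :: "'a list"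
  assumes "simple_graph V E" and "connected_graph V E" and "s \<in> V"
    and "spanning_tree V E T"
    and "\<exists>\<sigma>'. is_lexdfs_order V E s \<sigma>' \<and> T = ltree E \<sigma>'"
    and "vertex_order V \<sigma>" and "hd \<sigma> = s" and "T = ltree E \<sigma>"
  shows "\<forall>bfs. bfs_order T s bfs \<longrightarrow>
           (ordering_outputs V E T s (rev \<sigma>) bfs \<sigma> \<longleftrightarrow> is_lexdfs_order V E s \<sigma>)"
proof (intro allI impI)
  fix bfs assume b: "bfs_order T s bfs"
  obtain \<sigma>' where s': "is_lexdfs_order V E s \<sigma>'" "T = ltree E \<sigma>'" using assms(5) by blast
  interpret L11b V E s \<sigma> \<sigma>' bfs
  proof
    show "simple_graph V E" by (rule assms(1))
    show "vertex_order V \<sigma>" by (rule assms(6))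
    show "hd \<sigma> = s" by (rule assms(7))
    show "s \<in> V" by (rule assms(3))
    show "is_lexdfs_order V E s \<sigma>'" by (rule s'(1))
    show "ltree E \<sigma>' = ltree E \<sigma>" using s'(2) assms(8) by simp
    show "spanning_tree V E (ltree E \<sigma>)" using assms(4,8) by simp
    show "bfs_order (ltree E \<sigma>) s bfs" using b assms(8) by simp
  qed
  show "ordering_outputs V E T s (rev \<sigma>) bfs \<sigma> \<longleftrightarrow> is_lexdfs_order V E s \<sigma>"
    unfolding ordering_outputs_def assms(8)
    using lex_of_output run_of_lex by blast
qed

end
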